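(* Let $c \geq 1$ be an integer. For each integer $p \geq 3$ there is an infinite sequence of CNFs $F_1,F_2,\dots$, each of whose primal graphs has treewidth at most $p$, such that for each $F_i$, every $c$-NSOBDD computing $F_i$ has size at least $\left(\frac{m}{3p^2}\right)^{p/(8c-4)}$, where $m$ is the number of variables of $F_i$. In particular, for $c=1$ and every fixed $p$ this size is $\Omega(m^{p/4})$.
   Context: The primal graph of a CNF has the variables as vertices, two being adjacent iff they occur together in some clause. A non-deterministic branching program is a directed acyclic graph with one root and one leaf, some of whose edges are labelled by literals of variables. A path is consistent if it does not contain two edges labelled by opposite literals of the same variable; a consistent root-leaf path is a computational path. The program computes $F$: an assignment $S$ (as a set of literals) satisfies $F$ iff some computational path has all its labels in $S$. A $c$-NSOBDD is such a program for which there is a permutation $SV$ of its variables such that every computational path $P$ can be written as $P=P_1+\dots+P_c$ (concatenation of subpaths) where on each $P_i$ each variable occurs at most once and the labels along $P_i$ are ordered according to $SV$. Size is the number of nodes. *)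

theory Defs
  imports Complex_Main
begin

datatype 'v lit = Pos 'v | Neg 'v

fun lvar :: "'v lit \<Rightarrow> 'v" where
  "lvar (Pos x) = x" | "lvar (Neg x) = x"

fun lit_true :: "('v \<Rightarrow> bool) \<Rightarrow> 'v lit \<Rightarrow> bool" where
  "lit_true \<sigma> (Pos x) = \<sigma> x" | "lit_true \<sigma> (Neg x) = (\<not> \<sigma> x)"

definition lits_of :: "('v \<Rightarrow> bool) \<Rightarrow> 'v lit set" where
  "lits_of \<sigma> = {l. lit_true \<sigma> l}"

type_synonym 'v clause = "'v lit set"
type_synonym 'v cnf = "'v clause set"

definition is_cnf :: "'v cnf \<Rightarrow> bool" where
  "is_cnf F \<longleftrightarrow> finite F \<and> (\<forall>C\<in>F. finite C)"

definition cnf_vars :: "'v cnf \<Rightarrow> 'v set" where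
  "cnf_vars F = {lvar l | l. \<exists>C\<in>F. l \<in> C}"

definition cnf_sat :: "('v \<Rightarrow> bool) \<Rightarrow> 'v cnf \<Rightarrow> bool" where
  "cnf_sat \<sigma> F \<longleftrightarrow> (\<forall>C\<in>F. \<exists>l\<in>C. l \<in> lits_of \<sigma>)"

text \<open>Undirected graphs are given by a vertex set and a set of 2-element edges.\<close>
definition primal_edges :: "'v cnf \<Rightarrow> 'v set set" where
  "primal_edges F = {{x, y} | x y. x \<noteq> y \<and> (\<exists>C\<in>F. x \<in> lvar ` C \<and> y \<in> lvar ` C)}"

definition connected_in :: "'t set \<Rightarrow> 't set set \<Rightarrow> bool" where
  "connected_in S TE \<longleftrightarrow>
     (\<forall>a\<in>S. \<forall>b\<in>S. (a, b) \<in> {(x, y). {x, y} \<in> TE \<and> x \<in> S \<and> y \<in> S}\<^sup>*)"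

definition is_tree :: "nat set \<Rightarrow> nat set set \<Rightarrow> bool" where
  "is_tree T TE \<longleftrightarrow> finite T \<and> T \<noteq> {} \<and>
     (\<forall>e\<in>TE. \<exists>a b. e = {a, b} \<and> a \<noteq> b \<and> a \<in> T \<and> b \<in> T) \<and>
     connected_in T TE \<and> card TE + 1 = card T"

definition tree_decomp ::
  "'v set \<Rightarrow> 'v set set \<Rightarrow> nat set \<Rightarrow> nat set set \<Rightarrow> (nat \<Rightarrow> 'v set) \<Rightarrow> bool" where
  "tree_decomp V E T TE bag \<longleftrightarrow> is_tree T TE \<and>
     (\<forall>t\<in>T. bag t \<subseteq> V) \<and>
     (\<forall>v\<in>V. \<exists>t\<in>T. v \<in> bag t) \<and>
     (\<forall>e\<in>E. \<exists>t\<in>T. e \<subseteq> bag t) \<and>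
     (\<forall>v\<in>V. connected_in {t\<in>T. v \<in> bag t} TE)"

definition treewidth :: "'v set \<Rightarrow> 'v set set \<Rightarrow> nat" where
  "treewidth V E = (LEAST k. \<exists>T TE bag. tree_decomp V E T TE bag \<and>
       (\<forall>t\<in>T. finite (bag t) \<and> card (bag t) \<le> k + 1))"

definition primal_treewidth :: "'v cnf \<Rightarrow> nat" where
  "primal_treewidth F = treewidth (cnf_vars F) (primal_edges F)"

text \<open>Edges are triples (source, optional literal label, target).\<close>
type_synonym 'v bp_edge = "nat \<times> 'v lit option \<times> nat"

record 'v bp =
  bp_nodes :: "nat set"
  bp_edges :: "'v bp_edge set"
  bp_root :: nat
  bp_leaf :: nat

definition bp_succ :: "'v bp \<Rightarrow> (nat \<times> nat) set" where
  "bp_succ B = {(u, w). \<exists>l. (u, l, w) \<in> bp_edges B}"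

definition is_nbp :: "'v bp \<Rightarrow> bool" where
  "is_nbp B \<longleftrightarrow> finite (bp_nodes B) \<and> finite (bp_edges B) \<and>
     (\<forall>(u, l, w)\<in>bp_edges B. u \<in> bp_nodes B \<and> w \<in> bp_nodes B) \<and>
     acyclic (bp_succ B) \<and>
     bp_root B \<in> bp_nodes B \<and> bp_leaf B \<in> bp_nodes B \<and>
     (\<forall>u\<in>bp_nodes B. (\<nexists>w. (w, u) \<in> bp_succ B) \<longleftrightarrow> u = bp_root B) \<and>
     (\<forall>u\<in>bp_nodes B. (\<nexists>w. (u, w) \<in> bp_succ B) \<longleftrightarrow> u = bp_leaf B)"

definition bp_size :: "'v bp \<Rightarrow> nat" where
  "bp_size B = card (bp_nodes B)"

fun is_path :: "'v bp_edge set \<Rightarrow> nat \<Rightarrow> 'v bp_edge list \<Rightarrow> nat \<Rightarrow> bool" where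
  "is_path E u [] w \<longleftrightarrow> u = w"
| "is_path E u (e # P) w \<longleftrightarrow> e \<in> E \<and> fst e = u \<and> is_path E (snd (snd e)) P w"

definition path_labels :: "'v bp_edge list \<Rightarrow> 'v lit set" where
  "path_labels P = {l. \<exists>u w. (u, Some l, w) \<in> set P}"

definition consistent :: "'v bp_edge list \<Rightarrow> bool" where
  "consistent P \<longleftrightarrow> \<not> (\<exists>x. Pos x \<in> path_labels P \<and> Neg x \<in> path_labels P)"

definition comp_path :: "'v bp \<Rightarrow> 'v bp_edge list \<Rightarrow> bool" where
  "comp_path B P \<longleftrightarrow> is_path (bp_edges B) (bp_root B) P (bp_leaf B) \<and> consistent P"

definition computes :: "'v bp \<Rightarrow> 'v cnf \<Rightarrow> bool" where
  "computes B F \<longleftrightarrow>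
     (\<forall>\<sigma>. cnf_sat \<sigma> F \<longleftrightarrow> (\<exists>P. comp_path B P \<and> path_labels P \<subseteq> lits_of \<sigma>))"

definition bp_vars :: "'v bp \<Rightarrow> 'v set" where
  "bp_vars B = {lvar l | l. \<exists>u w. (u, Some l, w) \<in> bp_edges B}"

definition label_vars :: "'v bp_edge list \<Rightarrow> 'v list" where
  "label_vars P = map lvar (List.map_filter (\<lambda>e. fst (snd e)) P)"

definition sv_less :: "'v list \<Rightarrow> 'v \<Rightarrow> 'v \<Rightarrow> bool" where
  "sv_less SV x y \<longleftrightarrow> (\<exists>i j. i < j \<and> j < length SV \<and> SV ! i = x \<and> SV ! j = y)"

definition is_c_NSOBDD :: "nat \<Rightarrow> 'v bp \<Rightarrow> bool" where
  "is_c_NSOBDD c B \<longleftrightarrow> is_nbp B \<and>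
     (\<exists>SV. distinct SV \<and> set SV = bp_vars B \<and>
        (\<forall>P. comp_path B P \<longrightarrow>
           (\<exists>Ps. length Ps = c \<and> concat Ps = P \<and>
              (\<forall>Q\<in>set Ps. sorted_wrt (sv_less SV) (label_vars Q)))))"

end

theory Submission
  imports Defs "HOL-Library.Countable"
begin
definition mixa :: "'v set \<Rightarrow> ('v \<Rightarrow> bool) \<Rightarrow> ('v \<Rightarrow> bool) \<Rightarrow> 'v \<Rightarrow> bool" where
  "mixa X \<sigma> \<tau> = (\<lambda>v. if v \<in> X then \<sigma> v else \<tau> v)"

definition dclosed :: "'v list \<Rightarrow> 'v set \<Rightarrow> bool" where
  "dclosed SV X \<longleftrightarrow> (\<forall>i j. i < j \<longrightarrow> j < length SV \<longrightarrow> SV ! j \<in> X \<longrightarrow> SV ! i \<in> X)"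

definition pend :: "nat \<Rightarrow> 'v bp_edge list \<Rightarrow> nat" where
  "pend u xs = (if xs = [] then u else snd (snd (last xs)))"

lemma is_path_append: "is_path E u (xs @ ys) w \<longleftrightarrow> (\<exists>v. is_path E u xs v \<and> is_path E v ys w)"
  by (induction xs arbitrary: u) auto

lemma is_path_pend: "is_path E u xs w \<Longrightarrow> w = pend u xs"
  by (induction xs arbitrary: u) (auto simp: pend_def)

lemma path_concat_D:
  assumes "is_path E u (concat L) w" "i < length L"
  shows "is_path E (pend u (concat (take i L))) (L!i) (pend u (concat (take (Suc i) L)))"
proof -
  have eq: "concat L = (concat (take i L) @ L!i) @ concat (drop (Suc i) L)"
    using assms(2) by (metis append.assoc concat.simps(2) concat_append id_take_nth_drop)
  from assms(1)[unfolded eq] obtain v2 where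
    h2: "is_path E u (concat (take i L) @ L!i) v2" by (auto simp: is_path_append)
  then obtain v1 where h1: "is_path E u (concat (take i L)) v1" "is_path E v1 (L!i) v2"
    by (auto simp: is_path_append)
  have "concat (take (Suc i) L) = concat (take i L) @ L!i"
    using assms(2) by (simp add: take_Suc_conv_app_nth)
  then show ?thesis using h1 h2 is_path_pend by metis
qed

lemma path_concat_I:
  assumes "\<forall>i<length L. is_path E (nd i) (L!i) (nd (Suc i))" "k \<le> length L"
  shows "is_path E (nd 0) (concat (take k L)) (nd k)"
  using assms(2)
proof (induction k)
  case 0 then show ?case by simp
next
  case (Suc k)
  have "concat (take (Suc k) L) = concat (take k L) @ L!k"
    using Suc.prems by (simp add: take_Suc_conv_app_nth)
  then show ?case using Suc assms(1) by (auto simp: is_path_append)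
qed

lemma is_path_nodes:
  assumes "is_path E u xs w" "u \<in> N" "\<forall>(a, l, b)\<in>E. b \<in> N"
  shows "w \<in> N"
  using assms by (induction xs arbitrary: u) auto

lemma labels_consistent: "path_labels P \<subseteq> lits_of \<sigma> \<Longrightarrow> consistent P"
  unfolding consistent_def lits_of_def
  by (metis (mono_tags) lit_true.simps mem_Collect_eq subsetD)

definition inX :: "'v set \<Rightarrow> 'v bp_edge \<Rightarrow> bool" where
  "inX X e = (case fst (snd e) of None \<Rightarrow> True | Some l \<Rightarrow> lvar l \<in> X)"

definition segs :: "'v set \<Rightarrow> 'v bp_edge list list \<Rightarrow> 'v bp_edge list list" where
  "segs X Ps = concat (map (\<lambda>Q. [takeWhile (inX X) Q, dropWhile (inX X) Q]) Ps)"

lemma segs_length: "length (segs X Ps) = 2 * length Ps"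
  by (induction Ps) (auto simp: segs_def)

lemma segs_concat: "concat (segs X Ps) = concat Ps"
  by (induction Ps) (auto simp: segs_def)

lemma segs_nth: "i < 2 * length Ps \<Longrightarrow> segs X Ps ! i =
   (if even i then takeWhile (inX X) (Ps ! (i div 2)) else dropWhile (inX X) (Ps ! (i div 2)))"
proof (induction Ps arbitrary: i)
  case Nil then show ?case by simp
next
  case (Cons Q Ps)
  have s: "segs X (Q # Ps) = takeWhile (inX X) Q # dropWhile (inX X) Q # segs X Ps"
    by (simp add: segs_def)
  show ?case
  proof (cases i)
    case 0 then show ?thesis by (simp add: s)
  next
    case (Suc i')
    show ?thesis
    proof (cases i')
      case 0 then show ?thesis using Suc by (simp add: s)
    next
      case (Suc i'')
      then have "i'' < 2 * length Ps" using Cons.prems \<open>i = Suc i'\<close> by simp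
      then show ?thesis using Cons.IH[of i''] \<open>i = Suc i'\<close> Suc by (simp add: s)
    qed
  qed
qed

lemma label_vars_Nil[simp]: "label_vars [] = []"
  by (simp add: label_vars_def)

lemma label_vars_Cons: "label_vars (e # xs) =
   (case fst (snd e) of None \<Rightarrow> label_vars xs | Some l \<Rightarrow> lvar l # label_vars xs)"
  by (simp add: label_vars_def split: option.split)

lemma label_vars_append: "label_vars (xs @ ys) = label_vars xs @ label_vars ys"
  by (induction xs) (auto simp: label_vars_Cons split: option.split)

lemma label_vars_mem: "(u, Some l, w) \<in> set xs \<Longrightarrow> lvar l \<in> set (label_vars xs)"
  by (induction xs) (auto simp: label_vars_Cons split: option.split)

lemma drop_notX:
  assumes srt: "sorted_wrt (sv_less SV) (label_vars Q)" and dc: "dclosed SV X"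
    and mem: "(u, Some l, w) \<in> set (dropWhile (inX X) Q)"
  shows "lvar l \<notin> X"
proof -
  obtain e0 D' where D: "dropWhile (inX X) Q = e0 # D'"
    using mem by (cases "dropWhile (inX X) Q") auto
  have ne0: "\<not> inX X e0" using D by (metis dropWhile_eq_Cons_conv)
  then obtain l0 where l0: "fst (snd e0) = Some l0" "lvar l0 \<notin> X"
    by (auto simp: inX_def split: option.splits)
  have Q: "Q = takeWhile (inX X) Q @ e0 # D'" using D by (metis takeWhile_dropWhile_id)
  have lv: "label_vars Q = label_vars (takeWhile (inX X) Q) @ lvar l0 # label_vars D'"
    by (subst Q) (simp add: label_vars_append label_vars_Cons l0)
  show ?thesis
  proof (cases "(u, Some l, w) = e0")
    case True then show ?thesis using l0 by auto
  next
    case False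
    then have "(u, Some l, w) \<in> set D'" using mem D by auto
    then have "lvar l \<in> set (label_vars D')" by (rule label_vars_mem)
    then have "sv_less SV (lvar l0) (lvar l)" using srt lv by (simp add: sorted_wrt_append)
    then obtain i j where "i < j" "j < length SV" "SV ! i = lvar l0" "SV ! j = lvar l"
      by (auto simp: sv_less_def)
    then show ?thesis using dc l0 unfolding dclosed_def by metis
  qed
qed

lemma lit_mix_X: "lvar l \<in> X \<Longrightarrow> lit_true (mixa X \<sigma> \<tau>) l = lit_true \<sigma> l"
  by (cases l) (auto simp: mixa_def)

lemma lit_mix_Y: "lvar l \<notin> X \<Longrightarrow> lit_true (mixa X \<sigma> \<tau>) l = lit_true \<tau> l"
  by (cases l) (auto simp: mixa_def)

lemma path_labels_concat: "path_labels (concat L) = (\<Union>Q\<in>set L. path_labels Q)"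
  by (auto simp: path_labels_def)

lemma partA:
  assumes nbp: "is_nbp B"
  and paths: "\<forall>P. comp_path B P \<longrightarrow> (\<exists>Ps. length Ps = c \<and> concat Ps = P \<and>
              (\<forall>Q\<in>set Ps. sorted_wrt (sv_less SV) (label_vars Q)))"
  and comp: "computes B F" and dc: "dclosed SV X" and c1: "c \<ge> 1"
  and sat: "\<forall>\<sigma>\<in>S. cnf_sat \<sigma> F"
  and fool: "\<forall>\<sigma>\<in>S. \<forall>\<tau>\<in>S. \<sigma> \<noteq> \<tau> \<longrightarrow> \<not> cnf_sat (mixa X \<sigma> \<tau>) F \<or> \<not> cnf_sat (mixa X \<tau> \<sigma>) F"
  shows "card S \<le> bp_size B ^ (2*c - 1)"
proof -
  have "\<forall>\<sigma>\<in>S. \<exists>P. comp_path B P \<and> path_labels P \<subseteq> lits_of \<sigma>"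
    using sat comp unfolding computes_def by blast
  then obtain P where P: "\<And>\<sigma>. \<sigma> \<in> S \<Longrightarrow> comp_path B (P \<sigma>) \<and> path_labels (P \<sigma>) \<subseteq> lits_of \<sigma>"
    by metis
  have "\<forall>\<sigma>\<in>S. \<exists>Ps. length Ps = c \<and> concat Ps = P \<sigma> \<and>
              (\<forall>Q\<in>set Ps. sorted_wrt (sv_less SV) (label_vars Q))"
    using P paths by blast
  then obtain Ps where Ps: "\<And>\<sigma>. \<sigma> \<in> S \<Longrightarrow> length (Ps \<sigma>) = c \<and> concat (Ps \<sigma>) = P \<sigma> \<and>
              (\<forall>Q\<in>set (Ps \<sigma>). sorted_wrt (sv_less SV) (label_vars Q))"
    by metis
  define L where "L \<sigma> = segs X (Ps \<sigma>)" for \<sigma>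
  define n where "n = 2 * c"
  define r where "r = bp_root B"
  define nd where "nd \<sigma> i = pend r (concat (take i (L \<sigma>)))" for \<sigma> i
  define tup where "tup \<sigma> = map (nd \<sigma>) [1..<n]" for \<sigma>
  have lenL: "\<And>\<sigma>. \<sigma> \<in> S \<Longrightarrow> length (L \<sigma>) = n"
    using Ps by (simp add: L_def n_def segs_length)
  have catL: "\<And>\<sigma>. \<sigma> \<in> S \<Longrightarrow> concat (L \<sigma>) = P \<sigma>"
    using Ps by (simp add: L_def segs_concat)
  have pathL: "\<And>\<sigma>. \<sigma> \<in> S \<Longrightarrow> is_path (bp_edges B) r (concat (L \<sigma>)) (bp_leaf B)"
    using P catL by (simp add: comp_path_def r_def)
  have nd0: "\<And>\<sigma>. nd \<sigma> 0 = r" by (simp add: nd_def pend_def)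
  have ndn: "\<And>\<sigma>. \<sigma> \<in> S \<Longrightarrow> nd \<sigma> n = bp_leaf B"
    using pathL lenL is_path_pend unfolding nd_def by (metis order_refl take_all)
  have segstep: "\<And>\<sigma> i. \<sigma> \<in> S \<Longrightarrow> i < n \<Longrightarrow> is_path (bp_edges B) (nd \<sigma> i) (L \<sigma> ! i) (nd \<sigma> (Suc i))"
    unfolding nd_def using pathL lenL path_concat_D by metis
  have Xlab: "\<And>\<sigma> i u l w. \<sigma> \<in> S \<Longrightarrow> i < n \<Longrightarrow> even i \<Longrightarrow> (u, Some l, w) \<in> set (L \<sigma> ! i) \<Longrightarrow> lvar l \<in> X"
  proof -
    fix \<sigma> i u l w assume a: "\<sigma> \<in> S" "i < n" "even i" "(u, Some l, w) \<in> set (L \<sigma> ! i)"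
    then have "L \<sigma> ! i = takeWhile (inX X) (Ps \<sigma> ! (i div 2))"
      using segs_nth[of i "Ps \<sigma>" X] Ps[OF a(1)] by (simp add: L_def n_def)
    then show "lvar l \<in> X" using a(4) set_takeWhileD by (fastforce simp: inX_def)
  qed
  have Ylab: "\<And>\<sigma> i u l w. \<sigma> \<in> S \<Longrightarrow> i < n \<Longrightarrow> odd i \<Longrightarrow> (u, Some l, w) \<in> set (L \<sigma> ! i) \<Longrightarrow> lvar l \<notin> X"
  proof -
    fix \<sigma> i u l w assume a: "\<sigma> \<in> S" "i < n" "odd i" "(u, Some l, w) \<in> set (L \<sigma> ! i)"
    then have eq: "L \<sigma> ! i = dropWhile (inX X) (Ps \<sigma> ! (i div 2))"
      using segs_nth[of i "Ps \<sigma>" X] Ps[OF a(1)] by (simp add: L_def n_def)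
    have "i div 2 < length (Ps \<sigma>)" using a(2) Ps[OF a(1)] by (simp add: n_def)
    then have "sorted_wrt (sv_less SV) (label_vars (Ps \<sigma> ! (i div 2)))"
      using Ps[OF a(1)] by (metis nth_mem)
    then show "lvar l \<notin> X" using drop_notX dc a(4) eq by metis
  qed
  have labS: "\<And>\<sigma> Q. \<sigma> \<in> S \<Longrightarrow> Q \<in> set (L \<sigma>) \<Longrightarrow> path_labels Q \<subseteq> lits_of \<sigma>"
  proof -
    fix \<sigma> Q assume a: "\<sigma> \<in> S" "Q \<in> set (L \<sigma>)"
    have "path_labels Q \<subseteq> path_labels (concat (L \<sigma>))" using a(2) path_labels_concat by blast
    then show "path_labels Q \<subseteq> lits_of \<sigma>" using P[OF a(1)] catL[OF a(1)] by auto
  qed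
  have key: "\<And>\<sigma> \<tau>. \<sigma> \<in> S \<Longrightarrow> \<tau> \<in> S \<Longrightarrow> tup \<sigma> = tup \<tau> \<Longrightarrow> cnf_sat (mixa X \<sigma> \<tau>) F"
  proof -
    fix \<sigma> \<tau> assume s: "\<sigma> \<in> S" and t: "\<tau> \<in> S" and eqt: "tup \<sigma> = tup \<tau>"
    have ndeq: "\<And>i. i \<le> n \<Longrightarrow> nd \<tau> i = nd \<sigma> i"
    proof -
      fix i assume i: "i \<le> n"
      show "nd \<tau> i = nd \<sigma> i"
      proof (cases "i = 0")
        case True then show ?thesis by (simp add: nd0)
      next
        case False
        show ?thesis
        proof (cases "i = n")
          case True then show ?thesis using ndn s t by simp
        next
          case False
          then have "i - 1 < length [1..<n]" "[1..<n] ! (i - 1) = i" using i \<open>i \<noteq> 0\<close> by auto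
          then show ?thesis using eqt unfolding tup_def by (metis nth_map)
        qed
      qed
    qed
    define Lc where "Lc = map (\<lambda>i. if even i then L \<sigma> ! i else L \<tau> ! i) [0..<n]"
    have lenc: "length Lc = n" by (simp add: Lc_def)
    have stepc: "\<forall>i<length Lc. is_path (bp_edges B) (nd \<sigma> i) (Lc ! i) (nd \<sigma> (Suc i))"
    proof (intro allI impI)
      fix i assume "i < length Lc"
      then have i: "i < n" by (simp add: lenc)
      show "is_path (bp_edges B) (nd \<sigma> i) (Lc ! i) (nd \<sigma> (Suc i))"
      proof (cases "even i")
        case True then show ?thesis using segstep[OF s i] i by (simp add: Lc_def)
      next
        case False
        then show ?thesis using segstep[OF t i] i ndeq[of i] ndeq[of "Suc i"]
          by (simp add: Lc_def)
      qed
    qed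
    have pc: "is_path (bp_edges B) r (concat Lc) (bp_leaf B)"
      using path_concat_I[OF stepc, of n] lenc nd0 ndn[OF s] by simp
    have labc: "path_labels (concat Lc) \<subseteq> lits_of (mixa X \<sigma> \<tau>)"
    proof
      fix l assume "l \<in> path_labels (concat Lc)"
      then obtain Q where Q: "Q \<in> set Lc" "l \<in> path_labels Q" by (auto simp: path_labels_concat)
      then obtain i where i: "i < n" "Q = (if even i then L \<sigma> ! i else L \<tau> ! i)"
        by (auto simp: Lc_def)
      obtain u w where uw: "(u, Some l, w) \<in> set Q" using Q(2) by (auto simp: path_labels_def)
      show "l \<in> lits_of (mixa X \<sigma> \<tau>)"
      proof (cases "even i")
        case True
        then have "lvar l \<in> X" using Xlab[OF s i(1) True] uw i(2) by simp
        moreover have "l \<in> lits_of \<sigma>" using labS[OF s, of Q] i uw True lenL[OF s]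
          by (auto simp: path_labels_def)
        ultimately show ?thesis by (simp add: lits_of_def lit_mix_X)
      next
        case False
        then have "lvar l \<notin> X" using Ylab[OF t i(1) _] uw i(2) by simp
        moreover have "l \<in> lits_of \<tau>" using labS[OF t, of Q] i uw False lenL[OF t]
          by (auto simp: path_labels_def)
        ultimately show ?thesis by (simp add: lits_of_def lit_mix_Y)
      qed
    qed
    have "comp_path B (concat Lc)"
      using pc labc labels_consistent by (auto simp: comp_path_def r_def)
    then show "cnf_sat (mixa X \<sigma> \<tau>) F" using comp labc unfolding computes_def by blast
  qed
  have inj: "inj_on tup S"
  proof (rule inj_onI, rule ccontr)
    fix \<sigma> \<tau> assume "\<sigma> \<in> S" "\<tau> \<in> S" "tup \<sigma> = tup \<tau>" "\<sigma> \<noteq> \<tau>"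
    then show False using key[of \<sigma> \<tau>] key[of \<tau> \<sigma>] fool by metis
  qed
  have edges_in: "\<forall>(a, l, b)\<in>bp_edges B. b \<in> bp_nodes B"
    using nbp unfolding is_nbp_def by blast
  have root_in: "r \<in> bp_nodes B" using nbp by (simp add: is_nbp_def r_def)
  have ndin: "\<And>\<sigma> i. \<sigma> \<in> S \<Longrightarrow> nd \<sigma> i \<in> bp_nodes B"
  proof -
    fix \<sigma> i assume s: "\<sigma> \<in> S"
    have "is_path (bp_edges B) r (concat (take i (L \<sigma>)) @ concat (drop i (L \<sigma>))) (bp_leaf B)"
      using pathL[OF s] by (metis append_take_drop_id concat_append)
    then obtain v where "is_path (bp_edges B) r (concat (take i (L \<sigma>))) v"
      by (auto simp: is_path_append)
    then show "nd \<sigma> i \<in> bp_nodes B"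
      using is_path_pend is_path_nodes[OF _ root_in edges_in] unfolding nd_def by metis
  qed
  have sub: "tup ` S \<subseteq> {xs. set xs \<subseteq> bp_nodes B \<and> length xs = 2*c - 1}"
    using ndin by (auto simp: tup_def n_def)
  have fin: "finite (bp_nodes B)" using nbp by (simp add: is_nbp_def)
  have "card S \<le> card {xs. set xs \<subseteq> bp_nodes B \<and> length xs = 2*c - 1}"
    by (rule card_inj_on_le[OF inj sub finite_lists_length_eq[OF fin]])
  also have "\<dots> = bp_size B ^ (2*c - 1)"
    by (simp add: card_lists_length_eq[OF fin] bp_size_def)
  finally show ?thesis .
qed

type_synonym vx = "nat list \<times> nat"

definition Ad :: "nat \<Rightarrow> nat list set" where
  "Ad h = {w. length w \<le> h \<and> (\<forall>x\<in>set w. x < 3)}"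

definition Vd :: "nat \<Rightarrow> nat \<Rightarrow> vx set" where
  "Vd s d = {(w, j). w \<in> Ad d \<and> j < s}"

definition Ed :: "nat \<Rightarrow> nat \<Rightarrow> (vx \<times> vx) set" where
  "Ed s d = {((w, j), (w, j')) | w j j'. w \<in> Ad d \<and> j < j' \<and> j' < s} \<union>
            {((w, j), (w @ [i], j')) | w i j j'. w @ [i] \<in> Ad d \<and> j < s \<and> j' < s}"

definition adj :: "('a \<times> 'a) set \<Rightarrow> 'a \<Rightarrow> 'a \<Rightarrow> bool" where
  "adj E x y \<longleftrightarrow> (x, y) \<in> E \<or> (y, x) \<in> E"

definition mt :: "('a \<times> 'a) set \<Rightarrow> ('a \<Rightarrow> nat) \<Rightarrow> nat \<Rightarrow> 'a set \<Rightarrow> ('a \<times> 'a) set \<Rightarrow> bool" where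
  "mt E r k W M \<longleftrightarrow> finite M \<and> inj_on fst M \<and> inj_on snd M \<and>
     (\<forall>(x, y)\<in>M. adj E x y \<and> r x < k \<and> k \<le> r y \<and> x \<in> W \<and> y \<in> W)"

lemma mt_empty: "mt E r k W {}" by (simp add: mt_def)

lemma mt_mono: "mt E r k W M \<Longrightarrow> W \<subseteq> W' \<Longrightarrow> mt E r k W' M"
  by (auto simp: mt_def)

lemma mt_union:
  assumes "mt E r k W1 M1" "mt E r k W2 M2" "W1 \<inter> W2 = {}"
  shows "mt E r k (W1 \<union> W2) (M1 \<union> M2) \<and> card (M1 \<union> M2) = card M1 + card M2"
proof -
  have f1: "fst ` M1 \<subseteq> W1" "snd ` M1 \<subseteq> W1" "fst ` M2 \<subseteq> W2" "snd ` M2 \<subseteq> W2"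
    using assms(1,2) unfolding mt_def by fastforce+
  have d: "M1 \<inter> M2 = {}"
  proof (rule ccontr)
    assume "M1 \<inter> M2 \<noteq> {}"
    then obtain m where "m \<in> M1" "m \<in> M2" by blast
    then show False using f1 assms(3) by blast
  qed
  have i1: "inj_on fst M1" "inj_on fst M2" "inj_on snd M1" "inj_on snd M2"
    using assms(1,2) unfolding mt_def by blast+
  have g: "fst ` M1 \<inter> fst ` M2 = {}" "snd ` M1 \<inter> snd ` M2 = {}" using f1 assms(3) by blast+
  have "inj_on fst (M1 \<union> M2)"
    using i1 g unfolding inj_on_Un by blast
  moreover have "inj_on snd (M1 \<union> M2)"
    using i1 g unfolding inj_on_Un by blast
  moreover have "finite (M1 \<union> M2)" using assms(1,2) by (simp add: mt_def)
  moreover have "\<forall>(x, y)\<in>M1 \<union> M2. adj E x y \<and> r x < k \<and> k \<le> r y \<and> x \<in> W1 \<union> W2 \<and> y \<in> W1 \<union> W2"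
    using assms(1,2) unfolding mt_def by blast
  ultimately show ?thesis using assms d by (simp add: mt_def card_Un_disjoint)
qed

definition grp :: "nat \<Rightarrow> nat list \<Rightarrow> vx set" where
  "grp s n = (\<lambda>j. (n, j)) ` {..<s}"

lemma card_grp: "card (grp s n) = s"
  by (simp add: grp_def card_image inj_on_def)

lemma finite_grp: "finite (grp s n)" by (simp add: grp_def)

lemma grp_mem: "x \<in> grp s n \<longleftrightarrow> fst x = n \<and> snd x < s"
  by (cases x) (auto simp: grp_def)

fun chainp :: "('b \<Rightarrow> 'b \<Rightarrow> bool) \<Rightarrow> 'b list \<Rightarrow> bool" where
  "chainp R [] = True"
| "chainp R [n] = True"
| "chainp R (n # n' # ns) = (R n n' \<and> chainp R (n' # ns))"

lemma chainp_Cons: "chainp R (x # ys) \<longleftrightarrow> (ys = [] \<or> (R x (hd ys) \<and> chainp R ys))"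
  by (cases ys) auto

lemma chainp_append:
  "chainp R (xs @ ys) \<longleftrightarrow> chainp R xs \<and> chainp R ys \<and> (xs \<noteq> [] \<longrightarrow> ys \<noteq> [] \<longrightarrow> R (last xs) (hd ys))"
  by (induction xs) (auto simp: chainp_Cons)

lemma chainp_rev: "chainp R (rev xs) \<longleftrightarrow> chainp (\<lambda>a b. R b a) xs"
  by (induction "\<lambda>a b. R b a" xs rule: chainp.induct) (auto simp: chainp_append)

definition gadj :: "(vx \<times> vx) set \<Rightarrow> nat \<Rightarrow> nat list \<Rightarrow> nat list \<Rightarrow> bool" where
  "gadj E s n n' \<longleftrightarrow> (\<forall>j<s. \<forall>j'<s. adj E (n, j) (n', j'))"

lemma gadj_sym: "gadj E s n n' = gadj E s n' n"
  by (auto simp: gadj_def adj_def)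

lemma card_le_inj':
  assumes "finite A" "finite B" "card A \<le> card B"
  obtains f where "inj_on f A" "f ` A \<subseteq> B"
  using card_le_inj[OF assms] by blast

lemma chain_match:
  assumes "chainp (gadj E s) ns" "distinct ns" "ns \<noteq> []"
    "\<forall>j<s. k \<le> r (last ns, j)" "H \<subseteq> grp s (hd ns)" "\<forall>x\<in>H. r x < k"
  shows "\<exists>M. mt E r k (H \<union> \<Union>(grp s ` set (tl ns))) M \<and> card H \<le> card M"
  using assms
proof (induction ns arbitrary: H rule: induct_list012)
  case 1 then show ?case by simp
next
  case (2 n)
  have "H = {}"
  proof (rule ccontr)
    assume "H \<noteq> {}"
    then obtain x where x: "x \<in> H" by blast
    then have "x \<in> grp s n" using 2(5) by auto
    then have "fst x = n" "snd x < s" by (meson grp_mem)+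
    then have "k \<le> r x" using 2(4) by (metis last_ConsL prod.collapse)
    then show False using 2(6) x by auto
  qed
  then show ?case by (intro exI[of _ "{}"]) (simp add: mt_empty)
next
  case (3 n n' rest)
  define Y1 where "Y1 = {x\<in>grp s n'. k \<le> r x}"
  define X1 where "X1 = {x\<in>grp s n'. r x < k}"
  have finH: "finite H" using 3(7) finite_grp[of s n] finite_subset by simp
  have finY: "finite Y1" "finite X1" using finite_grp by (auto simp: Y1_def X1_def)
  have cXY: "card X1 + card Y1 = s"
  proof -
    have "X1 \<union> Y1 = grp s n'" "X1 \<inter> Y1 = {}" by (auto simp: X1_def Y1_def)
    then show ?thesis using card_Un_disjoint[OF finY(2) finY(1)] card_grp by metis
  qed
  have Hn: "H \<subseteq> grp s n" using 3(7) by simp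
  have cH: "card H \<le> s" using Hn card_mono[OF finite_grp] card_grp by metis
  have ga: "gadj E s n n'" using 3(3) by simp
  have X1s: "X1 \<subseteq> grp s (hd (n' # rest))" "\<forall>x\<in>X1. r x < k" by (auto simp: X1_def)
  obtain M2 where M2: "mt E r k (X1 \<union> \<Union>(grp s ` set rest)) M2" "card X1 \<le> card M2"
  proof -
    have "chainp (gadj E s) (n' # rest)" using 3(3) by simp
    moreover have "distinct (n' # rest)" using 3(4) by simp
    moreover have "\<forall>j<s. k \<le> r (last (n' # rest), j)" using 3(6) by simp
    ultimately show ?thesis using "3.IH"(2)[OF _ _ _ _ X1s] that by auto
  qed
  have dis: "n \<notin> set (n' # rest)" "n' \<notin> set rest" using 3(4) by auto
  have W2disj: "(H \<union> Y1) \<inter> (X1 \<union> \<Union>(grp s ` set rest)) = {}"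
  proof -
    have a1: "H \<inter> X1 = {}" "Y1 \<inter> X1 = {}" using Hn dis by (auto simp: X1_def Y1_def grp_mem)
    have a2: "H \<inter> \<Union>(grp s ` set rest) = {}" using Hn dis by (auto simp: grp_mem)
    have a3: "Y1 \<inter> \<Union>(grp s ` set rest) = {}" using dis by (auto simp: Y1_def grp_mem)
    show ?thesis using a1 a2 a3 by blast
  qed
  have adjn: "\<And>x y. x \<in> grp s n \<Longrightarrow> y \<in> grp s n' \<Longrightarrow> adj E x y"
  proof -
    fix x y assume "x \<in> grp s n" "y \<in> grp s n'"
    then have "fst x = n" "snd x < s" "fst y = n'" "snd y < s"
      using grp_mem by blast+
    then have "x = (n, snd x)" "y = (n', snd y)" by (metis prod.collapse)+
    then show "adj E x y" using ga \<open>snd x < s\<close> \<open>snd y < s\<close> unfolding gadj_def by metis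
  qed
  obtain M1 where M1: "mt E r k (H \<union> Y1) M1" "card M1 + card X1 \<ge> card H"
  proof (cases "card H \<le> card Y1")
    case True
    then obtain f where f: "inj_on f H" "f ` H \<subseteq> Y1" using card_le_inj' finH finY by metis
    define M1 where "M1 = (\<lambda>x. (x, f x)) ` H"
    have "inj_on (\<lambda>x. (x, f x)) H" by (auto simp: inj_on_def)
    then have c: "card M1 = card H" by (simp add: M1_def card_image)
    have "inj_on fst M1" by (auto simp: M1_def inj_on_def)
    moreover have "inj_on snd M1" using f(1) by (auto simp: M1_def inj_on_def)
    moreover have "\<forall>(x, y)\<in>M1. adj E x y \<and> r x < k \<and> k \<le> r y \<and> x \<in> H \<union> Y1 \<and> y \<in> H \<union> Y1"
    proof
      fix m assume "m \<in> M1"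
      then obtain x where x: "x \<in> H" "m = (x, f x)" by (auto simp: M1_def)
      have "f x \<in> Y1" using f(2) x(1) by blast
      then have "f x \<in> grp s n'" "k \<le> r (f x)" by (auto simp: Y1_def)
      moreover have "x \<in> grp s n" using Hn x(1) by blast
      ultimately show "case m of (x, y) \<Rightarrow> adj E x y \<and> r x < k \<and> k \<le> r y \<and> x \<in> H \<union> Y1 \<and> y \<in> H \<union> Y1"
        using x 3(8) adjn \<open>f x \<in> Y1\<close> by auto
    qed
    ultimately have "mt E r k (H \<union> Y1) M1" using finH by (simp add: mt_def M1_def)
    then show ?thesis using that c by simp
  next
    case False
    then obtain g where g: "inj_on g Y1" "g ` Y1 \<subseteq> H" using card_le_inj' finH finY
      by (metis nat_le_linear)
    define M1 where "M1 = (\<lambda>y. (g y, y)) ` Y1"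
    have "inj_on (\<lambda>y. (g y, y)) Y1" by (auto simp: inj_on_def)
    then have c: "card M1 = card Y1" by (simp add: M1_def card_image)
    have "inj_on snd M1" by (auto simp: M1_def inj_on_def)
    moreover have "inj_on fst M1" using g(1) by (auto simp: M1_def inj_on_def)
    moreover have "\<forall>(x, y)\<in>M1. adj E x y \<and> r x < k \<and> k \<le> r y \<and> x \<in> H \<union> Y1 \<and> y \<in> H \<union> Y1"
    proof
      fix m assume "m \<in> M1"
      then obtain y where y: "y \<in> Y1" "m = (g y, y)" by (auto simp: M1_def)
      have "g y \<in> H" using g(2) y(1) by blast
      then have "g y \<in> grp s n" using Hn by blast
      moreover have "y \<in> grp s n'" "k \<le> r y" using y(1) by (auto simp: Y1_def)
      ultimately show "case m of (x, y) \<Rightarrow> adj E x y \<and> r x < k \<and> k \<le> r y \<and> x \<in> H \<union> Y1 \<and> y \<in> H \<union> Y1"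
        using y 3(8) adjn \<open>g y \<in> H\<close> by auto
    qed
    ultimately have "mt E r k (H \<union> Y1) M1" using finY by (simp add: mt_def M1_def)
    then show ?thesis using that c cXY cH by simp
  qed
  have U: "mt E r k ((H \<union> Y1) \<union> (X1 \<union> \<Union>(grp s ` set rest))) (M1 \<union> M2) \<and>
      card (M1 \<union> M2) = card M1 + card M2"
    using mt_union[OF M1(1) M2(1) W2disj] .
  have XY: "X1 \<subseteq> grp s n'" "Y1 \<subseteq> grp s n'" unfolding X1_def Y1_def by blast+
  have sub: "(H \<union> Y1) \<union> (X1 \<union> \<Union>(grp s ` set rest)) \<subseteq> H \<union> \<Union>(grp s ` set (tl (n # n' # rest)))"
    using XY by auto
  have m: "mt E r k (H \<union> \<Union>(grp s ` set (tl (n # n' # rest)))) (M1 \<union> M2)"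
    using mt_mono[OF conjunct1[OF U] sub] .
  have "card H \<le> card (M1 \<union> M2)" using conjunct2[OF U] M1(2) M2(2) by linarith
  with m show ?case by blast
qed

fun down :: "nat list \<Rightarrow> nat list \<Rightarrow> nat list list" where
  "down a [] = [a]"
| "down a (i # z) = a # down (a @ [i]) z"

lemma down_ne: "down a z \<noteq> []" by (cases z) auto
lemma hd_down: "hd (down a z) = a" by (cases z) auto
lemma last_down: "last (down a z) = a @ z"
  by (induction z arbitrary: a) (auto simp: down_ne)

lemma set_down: "x \<in> set (down a z) \<Longrightarrow> \<exists>i\<le>length z. x = a @ take i z"
proof (induction z arbitrary: a)
  case Nil then show ?case by simp
next
  case (Cons i z)
  show ?case
  proof (cases "x = a")
    case True then show ?thesis by (intro exI[of _ 0]) simp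
  next
    case False
    then have "x \<in> set (down (a @ [i]) z)" using Cons.prems by simp
    then obtain i' where "i' \<le> length z" "x = (a @ [i]) @ take i' z" using Cons.IH by blast
    then show ?thesis by (intro exI[of _ "Suc i'"]) simp
  qed
qed

lemma down_len: "x \<in> set (down a z) \<Longrightarrow> length a \<le> length x"
  using set_down by fastforce

lemma distinct_down: "distinct (down a z)"
proof (induction z arbitrary: a)
  case Nil then show ?case by simp
next
  case (Cons i z)
  have "a \<notin> set (down (a @ [i]) z)" using down_len[of a "a @ [i]" z] by auto
  then show ?case using Cons.IH by simp
qed

definition dig :: "nat list \<Rightarrow> bool" where "dig a \<longleftrightarrow> (\<forall>x\<in>set a. x < 3)"

lemma Ad_app: "z \<in> Ad h \<Longrightarrow> dig a \<Longrightarrow> length a + h \<le> d \<Longrightarrow> a @ z \<in> Ad d"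
  by (auto simp: Ad_def dig_def)

lemma Ad_prefix: "w @ u \<in> Ad d \<Longrightarrow> w \<in> Ad d"
  by (auto simp: Ad_def)

lemma gadj_child: "w @ [i] \<in> Ad d \<Longrightarrow> gadj (Ed s d) s w (w @ [i])"
  unfolding gadj_def adj_def Ed_def by blast

lemma gadj_flip: "(\<lambda>x y. gadj E s y x) = gadj E s"
  by (auto simp: fun_eq_iff gadj_sym)

lemma chain_down: "a @ z \<in> Ad d \<Longrightarrow> chainp (gadj (Ed s d) s) (down a z)"
proof (induction z arbitrary: a)
  case Nil then show ?case by simp
next
  case (Cons i z)
  have "a @ [i] \<in> Ad d" using Cons.prems Ad_prefix[of "a @ [i]" z d] by simp
  moreover have "chainp (gadj (Ed s d) s) (down (a @ [i]) z)" using Cons.IH Cons.prems by simp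
  ultimately show ?case by (simp add: chainp_Cons down_ne hd_down gadj_child)
qed

definition fullX :: "nat \<Rightarrow> (vx \<Rightarrow> nat) \<Rightarrow> nat list \<Rightarrow> nat \<Rightarrow> nat \<Rightarrow> bool" where
  "fullX s r a h k \<longleftrightarrow> (\<exists>z\<in>Ad h. \<forall>j<s. r (a @ z, j) < k)"

definition fullY :: "nat \<Rightarrow> (vx \<Rightarrow> nat) \<Rightarrow> nat list \<Rightarrow> nat \<Rightarrow> nat \<Rightarrow> bool" where
  "fullY s r a h k \<longleftrightarrow> (\<exists>z\<in>Ad h. \<forall>j<s. k \<le> r (a @ z, j))"

definition allsplit :: "nat \<Rightarrow> (vx \<Rightarrow> nat) \<Rightarrow> nat list \<Rightarrow> nat \<Rightarrow> nat \<Rightarrow> bool" where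
  "allsplit s r a h k \<longleftrightarrow> (\<forall>z\<in>Ad h. (\<exists>j<s. r (a @ z, j) < k) \<and> (\<exists>j<s. k \<le> r (a @ z, j)))"

definition Wsub :: "nat \<Rightarrow> nat list \<Rightarrow> nat \<Rightarrow> vx set" where
  "Wsub s a h = {(a @ z, j) | z j. z \<in> Ad h \<and> j < s}"

lemma finite_Ad: "finite (Ad h)"
proof -
  have "Ad h \<subseteq> {xs. set xs \<subseteq> {..<3} \<and> length xs \<le> h}" by (auto simp: Ad_def)
  then show ?thesis using finite_lists_length_le[of "{..<3::nat}" h] finite_subset by blast
qed

lemma base_case:
  assumes s2: "2 \<le> s" and rinj: "inj_on r (Vd s d)" and len: "length a + h \<le> d" and da: "dig a"
    and nok: "\<not> (\<exists>k. fullX s r a h k \<and> fullY s r a h k)"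
  shows "\<exists>k. allsplit s r a h k"
proof -
  define N where "N = Ad h"
  have finN: "finite N" "N \<noteq> {}" using finite_Ad by (auto simp: N_def Ad_def intro: exI[of _ "[]"])
  define mn where "mn z = Min ((\<lambda>j. r (a @ z, j)) ` {..<s})" for z
  have sne: "{..<s} \<noteq> {}" using s2 by (metis lessThan_empty_iff not_numeral_le_zero)
  have mn_le: "\<And>z j. j < s \<Longrightarrow> mn z \<le> r (a @ z, j)" unfolding mn_def by simp
  have mn_in: "\<And>z. \<exists>j<s. r (a @ z, j) = mn z"
  proof -
    fix z
    have "mn z \<in> (\<lambda>j. r (a @ z, j)) ` {..<s}" unfolding mn_def using sne by (intro Min_in) auto
    then show "\<exists>j<s. r (a @ z, j) = mn z" by auto
  qed
  define \<kappa> where "\<kappa> = Max (mn ` N)"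
  have kge: "\<And>z. z \<in> N \<Longrightarrow> mn z \<le> \<kappa>" unfolding \<kappa>_def using finN by simp
  have "\<kappa> \<in> mn ` N" unfolding \<kappa>_def using finN by (intro Max_in) auto
  then obtain zs where zs: "zs \<in> N" "mn zs = \<kappa>" by blast
  obtain js where js: "js < s" "r (a @ zs, js) = \<kappa>" using mn_in zs(2) by metis
  have fy: "fullY s r a h \<kappa>" unfolding fullY_def N_def[symmetric] using zs mn_le by metis
  then have nfx: "\<not> fullX s r a h \<kappa>" using nok by blast
  have inV: "\<And>z j. z \<in> N \<Longrightarrow> j < s \<Longrightarrow> (a @ z, j) \<in> Vd s d"
    using Ad_app[OF _ da len] by (auto simp: Vd_def N_def)
  have "allsplit s r a h (Suc \<kappa>)"
    unfolding allsplit_def N_def[symmetric]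
  proof (intro ballI conjI)
    fix z assume z: "z \<in> N"
    obtain j where "j < s" "r (a @ z, j) = mn z" using mn_in by metis
    then show "\<exists>j<s. r (a @ z, j) < Suc \<kappa>" using kge[OF z] by auto
    obtain j1 where j1: "j1 < s" "\<kappa> \<le> r (a @ z, j1)"
      using nfx z unfolding fullX_def N_def[symmetric] by (meson not_less)
    show "\<exists>j<s. Suc \<kappa> \<le> r (a @ z, j)"
    proof (cases "\<kappa> < r (a @ z, j1)")
      case True then show ?thesis using j1 by (intro exI[of _ j1]) auto
    next
      case False
      then have "r (a @ z, j1) = r (a @ zs, js)" using j1 js by simp
      then have eq: "(a @ z, j1) = (a @ zs, js)"
        using rinj inV[OF z j1(1)] inV[OF zs(1) js(1)] by (meson inj_onD)
      define j2 :: nat where "j2 = (if js = 0 then 1 else 0)"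
      have j2: "j2 < s" "j2 \<noteq> js" using s2 by (auto simp: j2_def)
      have ge: "\<kappa> \<le> r (a @ zs, j2)" using zs mn_le j2(1) by metis
      have "r (a @ zs, j2) \<noteq> r (a @ zs, js)"
        using j2 rinj inV[OF zs(1) j2(1)] inV[OF zs(1) js(1)] by (meson Pair_inject inj_onD)
      then have "Suc \<kappa> \<le> r (a @ z, j2)" using ge js eq by auto
      then show ?thesis using j2(1) by blast
    qed
  qed
  then show ?thesis by blast
qed

lemma three_sort:
  fixes f :: "nat \<Rightarrow> nat"
  shows "\<exists>x y z. x < 3 \<and> y < 3 \<and> z < 3 \<and> x \<noteq> y \<and> y \<noteq> z \<and> x \<noteq> z \<and> f x \<le> f y \<and> f y \<le> f z"
proof (cases "f 0 \<le> f 1")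
  case True
  show ?thesis
  proof (cases "f 1 \<le> f 2")
    case True2: True
    show ?thesis using True True2 by (intro exI[of _ 0] exI[of _ 1] exI[of _ 2]) simp
  next
    case False2: False
    show ?thesis
    proof (cases "f 0 \<le> f 2")
      case True3: True
      show ?thesis using True3 False2 by (intro exI[of _ 0] exI[of _ 2] exI[of _ 1]) simp
    next
      case False3: False
      show ?thesis using True False3 by (intro exI[of _ 2] exI[of _ 0] exI[of _ 1]) simp
    qed
  qed
next
  case False
  show ?thesis
  proof (cases "f 1 \<le> f 2")
    case True2: True
    show ?thesis
    proof (cases "f 0 \<le> f 2")
      case True3: True
      show ?thesis using False True3 by (intro exI[of _ 1] exI[of _ 0] exI[of _ 2]) simp
    next
      case False3: False
      show ?thesis using True2 False3 by (intro exI[of _ 1] exI[of _ 2] exI[of _ 0]) simp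
    qed
  next
    case False2: False
    show ?thesis using False False2 by (intro exI[of _ 2] exI[of _ 1] exI[of _ 0]) simp
  qed
qed


lemma Wsub_child: "Wsub s (a @ [i]) h \<subseteq> Wsub s a (Suc h)" if "i < 3"
  using that by (auto simp: Wsub_def Ad_def)

lemma rec_main:
  assumes s2: "2 \<le> s" and rinj: "inj_on r (Vd s d)"
  shows "length a + (h0 + t) \<le> d \<Longrightarrow> dig a \<Longrightarrow>
    (\<exists>a' k. length a' + h0 \<le> d \<and> dig a' \<and> allsplit s r a' h0 k) \<or>
    (\<exists>k M. fullX s r a (h0 + t) k \<and> fullY s r a (h0 + t) k \<and>
       mt (Ed s d) r k (Wsub s a (h0 + t)) M \<and> s * t \<le> card M)"
proof (induction t arbitrary: a)
  case 0
  show ?case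
  proof (cases "\<exists>k. fullX s r a h0 k \<and> fullY s r a h0 k")
    case True
    then obtain k where "fullX s r a h0 k" "fullY s r a h0 k" by blast
    then show ?thesis using mt_empty[of "Ed s d" r k "Wsub s a h0"] by auto
  next
    case False
    have "length a + h0 \<le> d" using "0.prems"(1) by simp
    then obtain k where "allsplit s r a h0 k" using base_case[OF s2 rinj _ "0.prems"(2) False] by blast
    then show ?thesis using "0.prems" by auto
  qed
next
  case (Suc t)
  define h where "h = h0 + t"
  have chl: "\<And>i. i < 3 \<Longrightarrow> length (a @ [i]) + (h0 + t) \<le> d \<and> dig (a @ [i])"
    using Suc.prems by (auto simp: dig_def)
  show ?case
  proof (cases "\<exists>a' k. length a' + h0 \<le> d \<and> dig a' \<and> allsplit s r a' h0 k")
    case True then show ?thesis by blast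
  next
    case False
    have "\<forall>i. \<exists>k M. i < 3 \<longrightarrow> fullX s r (a @ [i]) h k \<and> fullY s r (a @ [i]) h k \<and>
       mt (Ed s d) r k (Wsub s (a @ [i]) h) M \<and> s * t \<le> card M"
      using Suc.IH chl False unfolding h_def by blast
    then obtain K MM where KM: "\<And>i. i < 3 \<Longrightarrow> fullX s r (a @ [i]) h (K i) \<and> fullY s r (a @ [i]) h (K i) \<and>
       mt (Ed s d) r (K i) (Wsub s (a @ [i]) h) (MM i) \<and> s * t \<le> card (MM i)"
      by metis
    obtain iA iB iC where ord: "iA < 3" "iB < 3" "iC < 3" "iA \<noteq> iB" "iB \<noteq> iC" "iA \<noteq> iC"
      "K iA \<le> K iB" "K iB \<le> K iC" using three_sort[of K] by blast
    define k where "k = K iB"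
    obtain zA where zA: "zA \<in> Ad h" "\<forall>j<s. r ((a @ [iA]) @ zA, j) < K iA"
      using KM[OF ord(1)] unfolding fullX_def by blast
    obtain zC where zC: "zC \<in> Ad h" "\<forall>j<s. K iC \<le> r ((a @ [iC]) @ zC, j)"
      using KM[OF ord(3)] unfolding fullY_def by blast
    have zAk: "\<forall>j<s. r ((a @ [iA]) @ zA, j) < k" using zA(2) ord(7) by (auto simp: k_def)
    have zCk: "\<forall>j<s. k \<le> r ((a @ [iC]) @ zC, j)" using zC(2) ord(8) by (auto simp: k_def)
    have lenh: "length a + Suc h \<le> d" "dig a" using Suc.prems by (auto simp: h_def)
    have AinAd: "(a @ [iA]) @ zA \<in> Ad d" "a @ (iC # zC) \<in> Ad d"
      using zA(1) zC(1) lenh ord(1,3) by (auto simp: Ad_def dig_def)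
    define xs where "xs = down (a @ [iA]) zA"
    define ys where "ys = down a (iC # zC)"
    define ns where "ns = rev xs @ ys"
    have xsne: "xs \<noteq> []" "ys \<noteq> []" by (auto simp: xs_def ys_def down_ne)
    have hdns: "hd ns = (a @ [iA]) @ zA"
      using xsne by (simp add: ns_def hd_append last_down xs_def hd_rev)
    have lastns: "last ns = a @ (iC # zC)"
      using xsne by (simp add: ns_def last_down ys_def down_ne)
    have setxs: "\<And>x. x \<in> set xs \<Longrightarrow> \<exists>u. x = a @ (iA # u) \<and> length u \<le> h \<and> dig u"
    proof -
      fix x assume "x \<in> set xs"
      then obtain i where "i \<le> length zA" "x = (a @ [iA]) @ take i zA"
        using set_down unfolding xs_def by blast
      then show "\<exists>u. x = a @ (iA # u) \<and> length u \<le> h \<and> dig u"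
        using zA(1) by (intro exI[of _ "take i zA"]) (auto simp: Ad_def dig_def dest: in_set_takeD)
    qed
    have setys: "\<And>x. x \<in> set ys \<Longrightarrow> x = a \<or> (\<exists>u. x = a @ (iC # u) \<and> length u \<le> h \<and> dig u)"
    proof -
      fix x assume "x \<in> set ys"
      then obtain i where i: "i \<le> length (iC # zC)" "x = a @ take i (iC # zC)"
        using set_down unfolding ys_def by blast
      show "x = a \<or> (\<exists>u. x = a @ (iC # u) \<and> length u \<le> h \<and> dig u)"
      proof (cases i)
        case 0 then show ?thesis using i by simp
      next
        case (Suc i')
        then show ?thesis using i zC(1)
          by (intro disjI2 exI[of _ "take i' zC"]) (auto simp: Ad_def dig_def dest: in_set_takeD)
      qed
    qed
    have dis: "set xs \<inter> set ys = {}"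
    proof (rule ccontr)
      assume "set xs \<inter> set ys \<noteq> {}"
      then obtain x where "x \<in> set xs" "x \<in> set ys" by blast
      then show False using setxs setys ord(6) by fastforce
    qed
    have "distinct xs" "distinct ys" unfolding xs_def ys_def by (rule distinct_down)+
    then have dns: "distinct ns" using dis by (simp add: ns_def)
    have cns: "chainp (gadj (Ed s d) s) ns"
    proof -
      have c1: "chainp (gadj (Ed s d) s) (rev xs)"
        using chain_down[OF AinAd(1), of s] by (simp add: chainp_rev gadj_flip xs_def)
      have c2: "chainp (gadj (Ed s d) s) ys" using chain_down[OF AinAd(2), of s] by (simp add: ys_def)
      have "a @ [iA] \<in> Ad d" using AinAd(1) Ad_prefix[of "a @ [iA]" zA d] by simp
      then have "gadj (Ed s d) s (last (rev xs)) (hd ys)"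
        using gadj_child[of a iA d s] gadj_sym xsne by (simp add: xs_def ys_def hd_down last_rev)
      then show ?thesis using c1 c2 by (simp add: ns_def chainp_append)
    qed
    have Hsub: "grp s (hd ns) \<subseteq> grp s (hd ns)" "\<forall>x\<in>grp s (hd ns). r x < k"
      by (rule subset_refl) (use zAk in \<open>simp add: hdns grp_def\<close>)
    have nsne: "ns \<noteq> []" using xsne by (simp add: ns_def)
    have lastY: "\<forall>j<s. k \<le> r (last ns, j)" using zCk lastns by simp
    obtain Mc where Mc: "mt (Ed s d) r k (grp s (hd ns) \<union> \<Union>(grp s ` set (tl ns))) Mc"
        "card (grp s (hd ns)) \<le> card Mc"
      using chain_match[OF cns dns nsne lastY Hsub] by blast
    define Wc where "Wc = \<Union>(grp s ` set ns)"
    have sns: "set ns = insert (hd ns) (set (tl ns))" using nsne by (cases ns) auto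
    have "grp s (hd ns) \<union> \<Union>(grp s ` set (tl ns)) \<subseteq> Wc"
      unfolding Wc_def using sns by (metis Union_image_insert equalityE)
    then have Mc': "mt (Ed s d) r k Wc Mc" by (rule mt_mono[OF Mc(1)])
    have cMc: "s \<le> card Mc" using Mc(2) card_grp by metis
    have MB: "mt (Ed s d) r k (Wsub s (a @ [iB]) h) (MM iB)" "s * t \<le> card (MM iB)"
      using KM[OF ord(2)] by (auto simp: k_def)
    have grp_Wsub: "\<And>n. n \<in> set ns \<Longrightarrow> \<exists>u. n = a @ u \<and> u \<in> Ad (Suc h) \<and> (\<forall>v. u \<noteq> iB # v)"
    proof -
      fix n assume "n \<in> set ns"
      then have "n \<in> set xs \<or> n \<in> set ys" by (auto simp: ns_def)
      then show "\<exists>u. n = a @ u \<and> u \<in> Ad (Suc h) \<and> (\<forall>v. u \<noteq> iB # v)"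
      proof
        assume "n \<in> set xs"
        then obtain u where "n = a @ (iA # u)" "length u \<le> h" "dig u" using setxs by blast
        then show ?thesis using ord(1,4) by (intro exI[of _ "iA # u"]) (auto simp: Ad_def dig_def)
      next
        assume "n \<in> set ys"
        then consider "n = a" | u where "n = a @ (iC # u)" "length u \<le> h" "dig u" using setys by blast
        then show ?thesis
        proof cases
          case 1 then show ?thesis by (intro exI[of _ "[]"]) (auto simp: Ad_def)
        next
          case 2 then show ?thesis using ord(3,5) by (intro exI[of _ "iC # u"]) (auto simp: Ad_def dig_def)
        qed
      qed
    qed
    have Wdis: "Wsub s (a @ [iB]) h \<inter> Wc = {}"
    proof (rule ccontr)
      assume "Wsub s (a @ [iB]) h \<inter> Wc \<noteq> {}"
      then obtain x where x1: "x \<in> Wsub s (a @ [iB]) h" and x2: "x \<in> Wc" by blast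
      obtain z where z: "fst x = a @ [iB] @ z" using x1 by (auto simp: Wsub_def)
      obtain n where n: "n \<in> set ns" "fst x = n" using x2 by (auto simp: Wc_def grp_def)
      obtain u where u: "n = a @ u" "\<forall>v. u \<noteq> iB # v" using grp_Wsub[OF n(1)] by blast
      have "u = iB # z" using z n(2) u(1) by simp
      then show False using u(2) by blast
    qed
    have Wc_sub: "Wc \<subseteq> Wsub s a (Suc h)"
    proof
      fix x assume "x \<in> Wc"
      then obtain n where n: "n \<in> set ns" "fst x = n" "snd x < s" by (auto simp: Wc_def grp_def)
      obtain u where "n = a @ u" "u \<in> Ad (Suc h)" using grp_Wsub[OF n(1)] by blast
      then show "x \<in> Wsub s a (Suc h)" using n unfolding Wsub_def by (cases x) auto
    qed
    have U: "mt (Ed s d) r k (Wsub s (a @ [iB]) h \<union> Wc) (MM iB \<union> Mc) \<and>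
        card (MM iB \<union> Mc) = card (MM iB) + card Mc"
      using mt_union[OF MB(1) Mc' Wdis] .
    have "Wsub s (a @ [iB]) h \<union> Wc \<subseteq> Wsub s a (Suc h)"
      using Wsub_child[OF ord(2)] Wc_sub by blast
    then have mfin: "mt (Ed s d) r k (Wsub s a (h0 + Suc t)) (MM iB \<union> Mc)"
      using mt_mono[OF conjunct1[OF U]] by (simp add: h_def)
    have cfin: "s * Suc t \<le> card (MM iB \<union> Mc)" using conjunct2[OF U] MB(2) cMc by simp
    have fx: "fullX s r a (h0 + Suc t) k"
      unfolding fullX_def using zAk zA(1) ord(1)
      by (intro bexI[of _ "iA # zA"]) (auto simp: Ad_def h_def)
    have fy: "fullY s r a (h0 + Suc t) k"
      unfolding fullY_def using zCk zC(1) ord(3)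
      by (intro bexI[of _ "iC # zC"]) (auto simp: Ad_def h_def)
    show ?thesis using fx fy mfin cfin by blast
  qed
qed

lemma Wsub_Nil: "Wsub s [] d = Vd s d" by (auto simp: Wsub_def Vd_def)

lemma order_lemma:
  assumes s2: "2 \<le> s" and rinj: "inj_on r (Vd s d)" and h0d: "h0 \<le> d" and big: "s * (d - h0) \<le> 3 ^ h0"
  shows "\<exists>k M. mt (Ed s d) r k (Vd s d) M \<and> s * (d - h0) \<le> card M"
proof -
  have pre: "length ([]::nat list) + (h0 + (d - h0)) \<le> d" "dig []" using h0d by (auto simp: dig_def)
  from rec_main[OF s2 rinj pre] show ?thesis
  proof
    assume "\<exists>a' k. length a' + h0 \<le> d \<and> dig a' \<and> allsplit s r a' h0 k"
    then obtain a' k where a': "length a' + h0 \<le> d" "dig a'" "allsplit s r a' h0 k" by blast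
    define Z where "Z = {z. set z \<subseteq> {..<3::nat} \<and> length z = h0}"
    have cZ: "card Z = 3 ^ h0" "finite Z"
      using card_lists_length_eq[of "{..<3::nat}" h0] finite_lists_length_eq[of "{..<3::nat}" h0]
      by (simp_all add: Z_def)
    have ZA: "\<And>z. z \<in> Z \<Longrightarrow> z \<in> Ad h0" by (auto simp: Z_def Ad_def)
    have "\<forall>z\<in>Z. \<exists>j1 j2. j1 < s \<and> j2 < s \<and> r (a' @ z, j1) < k \<and> k \<le> r (a' @ z, j2)"
      using a'(3) ZA unfolding allsplit_def by blast
    then obtain J1 J2 where J: "\<And>z. z \<in> Z \<Longrightarrow> J1 z < s \<and> J2 z < s \<and> r (a' @ z, J1 z) < k \<and> k \<le> r (a' @ z, J2 z)"
      by metis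
    define f where "f z = ((a' @ z, J1 z), (a' @ z, J2 z))" for z
    define M where "M = f ` Z"
    have inj: "inj_on f Z" by (auto simp: inj_on_def f_def)
    have cM: "card M = 3 ^ h0" using card_image[OF inj] cZ by (simp add: M_def)
    have wA: "\<And>z. z \<in> Z \<Longrightarrow> a' @ z \<in> Ad d" using Ad_app[OF ZA a'(2) a'(1)] by blast
    have adjz: "\<And>z. z \<in> Z \<Longrightarrow> adj (Ed s d) (a' @ z, J1 z) (a' @ z, J2 z)"
    proof -
      fix z assume z: "z \<in> Z"
      have ne: "J1 z \<noteq> J2 z" using J[OF z] by auto
      have w: "a' @ z \<in> Ad d" using wA[OF z] .
      show "adj (Ed s d) (a' @ z, J1 z) (a' @ z, J2 z)"
      proof (cases "J1 z < J2 z")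
        case True
        then have "((a' @ z, J1 z), (a' @ z, J2 z)) \<in> Ed s d" using w J[OF z] unfolding Ed_def by blast
        then show ?thesis by (simp add: adj_def)
      next
        case False
        then have "J2 z < J1 z" using ne by simp
        then have "((a' @ z, J2 z), (a' @ z, J1 z)) \<in> Ed s d" using w J[OF z] unfolding Ed_def by blast
        then show ?thesis by (simp add: adj_def)
      qed
    qed
    have "inj_on fst M" by (auto simp: inj_on_def M_def f_def)
    moreover have "inj_on snd M" by (auto simp: inj_on_def M_def f_def)
    moreover have "\<forall>(x, y)\<in>M. adj (Ed s d) x y \<and> r x < k \<and> k \<le> r y \<and> x \<in> Vd s d \<and> y \<in> Vd s d"
    proof
      fix m assume "m \<in> M"
      then obtain z where z: "z \<in> Z" "m = f z" by (auto simp: M_def)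
      show "case m of (x, y) \<Rightarrow> adj (Ed s d) x y \<and> r x < k \<and> k \<le> r y \<and> x \<in> Vd s d \<and> y \<in> Vd s d"
        using z adjz[OF z(1)] J[OF z(1)] wA[OF z(1)] by (simp add: f_def Vd_def)
    qed
    ultimately have "mt (Ed s d) r k (Vd s d) M" using cZ(2) by (simp add: mt_def M_def)
    then show ?thesis using cM big by (intro exI[of _ k] exI[of _ M]) simp
  next
    assume "\<exists>k M. fullX s r [] (h0 + (d - h0)) k \<and> fullY s r [] (h0 + (d - h0)) k \<and>
       mt (Ed s d) r k (Wsub s [] (h0 + (d - h0))) M \<and> s * (d - h0) \<le> card M"
    then show ?thesis using h0d by (auto simp: Wsub_Nil)
  qed
qed


lemma mt_D: "mt E r k W M \<Longrightarrow> (x, y) \<in> M \<Longrightarrow> adj E x y \<and> r x < k \<and> k \<le> r y \<and> x \<in> W \<and> y \<in> W"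
  unfolding mt_def by blast

lemma mt_noin: "mt E r k W M \<Longrightarrow> (x, y) \<in> M \<Longrightarrow> (x', x) \<notin> M"
  using mt_D[of E r k W M x y] mt_D[of E r k W M x' x] by linarith

lemma mt_noout: "mt E r k W M \<Longrightarrow> (x, y) \<in> M \<Longrightarrow> (y, y') \<notin> M"
  using mt_D[of E r k W M x y] mt_D[of E r k W M y y'] by linarith

type_synonym vt = "vx + (vx \<times> vx)"

definition enc :: "vt \<Rightarrow> nat" where "enc = to_nat"

lemma enc_inj: "enc a = enc b \<longleftrightarrow> a = b"
  by (simp add: enc_def)

lemma from_enc: "from_nat (enc a) = a"
  by (simp add: enc_def)

definition clause_of :: "vx \<times> vx \<Rightarrow> nat clause" where
  "clause_of e = {Pos (enc (Inl (fst e))), Pos (enc (Inl (snd e))), Pos (enc (Inr e))}"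

definition Fd :: "nat \<Rightarrow> nat \<Rightarrow> nat cnf" where
  "Fd s d = clause_of ` Ed s d"

definition sig' :: "(vx \<times> vx) set \<Rightarrow> (vx \<times> vx) set \<Rightarrow> vt \<Rightarrow> bool" where
  "sig' M T a = (case a of
      Inl v \<Rightarrow> (\<forall>y. (v, y) \<in> M \<longrightarrow> (v, y) \<notin> T) \<and> (\<forall>x. (x, v) \<in> M \<longrightarrow> (x, v) \<in> T)
    | Inr e \<Rightarrow> (\<forall>x y. (x, y) \<in> M \<longrightarrow> e \<noteq> (x, y) \<and> e \<noteq> (y, x)))"

definition sig :: "(vx \<times> vx) set \<Rightarrow> (vx \<times> vx) set \<Rightarrow> nat \<Rightarrow> bool" where
  "sig M T n = sig' M T (from_nat n)"

lemma sig_enc: "sig M T (enc a) = sig' M T a"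
  by (simp add: sig_def from_enc)

lemma cnf_sat_clause: "cnf_sat \<sigma> (Fd s d) \<longleftrightarrow>
   (\<forall>e\<in>Ed s d. \<sigma> (enc (Inl (fst e))) \<or> \<sigma> (enc (Inl (snd e))) \<or> \<sigma> (enc (Inr e)))"
  by (auto simp: cnf_sat_def Fd_def clause_of_def lits_of_def)

lemma sig_sat:
  assumes mt: "mt (Ed s d) r k W M" and T: "T \<subseteq> M"
  shows "cnf_sat (sig M T) (Fd s d)"
  unfolding cnf_sat_clause
proof
  fix e assume e: "e \<in> Ed s d"
  show "sig M T (enc (Inl (fst e))) \<or> sig M T (enc (Inl (snd e))) \<or> sig M T (enc (Inr e))"
  proof (cases "sig' M T (Inr e)")
    case True then show ?thesis by (simp add: sig_enc)
  next
    case False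
    then obtain x y where xy: "(x, y) \<in> M" "e = (x, y) \<or> e = (y, x)"
      unfolding sig'_def sum.case by blast
    have injf: "inj_on fst M" and injs: "inj_on snd M" using mt unfolding mt_def by blast+
    have noy: "\<And>y'. (y, y') \<notin> M" using mt_noout[OF mt xy(1)] by blast
    have nox: "\<And>x'. (x', x) \<notin> M" using mt_noin[OF mt xy(1)] by blast
    show ?thesis
    proof (cases "(x, y) \<in> T")
      case True
      have xx: "\<And>x'. (x', y) \<in> M \<Longrightarrow> x' = x"
      proof -
        fix x' assume a: "(x', y) \<in> M"
        have "(x', y) = (x, y)" using inj_onD[OF injs _ a xy(1)] by simp
        then show "x' = x" by simp
      qed
      have "sig' M T (Inl y)" unfolding sig'_def sum.case using True noy xx by blast
      then show ?thesis using xy(2) by (elim disjE) (simp_all add: sig_enc)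
    next
      case False
      have yy: "\<And>y'. (x, y') \<in> M \<Longrightarrow> y' = y"
      proof -
        fix y' assume a: "(x, y') \<in> M"
        have "(x, y') = (x, y)" using inj_onD[OF injf _ a xy(1)] by simp
        then show "y' = y" by simp
      qed
      have "sig' M T (Inl x)" unfolding sig'_def sum.case using False nox yy by blast
      then show ?thesis using xy(2) by (elim disjE) (simp_all add: sig_enc)
    qed
  qed
qed

lemma sig_fool:
  assumes mt: "mt (Ed s d) r k (Vd s d) M" and xy: "(x, y) \<in> M" "(x, y) \<in> T" "(x, y) \<notin> T'"
    and X: "\<forall>v\<in>Vd s d. enc (Inl v) \<in> X \<longleftrightarrow> r v < k"
  shows "\<not> cnf_sat (mixa X (sig M T) (sig M T')) (Fd s d)"
proof -
  have p: "adj (Ed s d) x y" "r x < k" "k \<le> r y" "x \<in> Vd s d" "y \<in> Vd s d"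
    using mt_D[OF mt xy(1)] by auto
  obtain e where e: "e \<in> Ed s d" "e = (x, y) \<or> e = (y, x)"
  proof (cases "(x, y) \<in> Ed s d")
    case True then show ?thesis using that by blast
  next
    case False then have "(y, x) \<in> Ed s d" using p(1) by (simp add: adj_def)
    then show ?thesis using that by blast
  qed
  have "enc (Inl x) \<in> X" "enc (Inl y) \<notin> X" using X p by auto
  moreover have "\<not> sig' M T (Inl x)" unfolding sig'_def sum.case using xy by blast
  moreover have "\<not> sig' M T' (Inl y)" unfolding sig'_def sum.case using xy by blast
  ultimately have v1: "\<not> mixa X (sig M T) (sig M T') (enc (Inl x))"
    and v2: "\<not> mixa X (sig M T) (sig M T') (enc (Inl y))"
    by (simp_all add: mixa_def sig_enc)
  have "\<not> sig' M T (Inr e)" "\<not> sig' M T' (Inr e)" unfolding sig'_def sum.case using xy(1) e(2) by blast+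
  then have v3: "\<not> mixa X (sig M T) (sig M T') (enc (Inr e))"
    by (simp add: mixa_def sig_enc)
  have "\<not> (mixa X (sig M T) (sig M T') (enc (Inl (fst e))) \<or> mixa X (sig M T) (sig M T') (enc (Inl (snd e)))
      \<or> mixa X (sig M T) (sig M T') (enc (Inr e)))"
    using e(2) v1 v2 v3 by auto
  then show ?thesis unfolding cnf_sat_clause using e(1) by blast
qed

lemma sig_inj:
  assumes mt: "mt (Ed s d) r k W M"
  shows "inj_on (sig M) (Pow M)"
proof -
  have injf: "inj_on fst M" using mt unfolding mt_def by blast
  have key: "\<And>T T' x y. T \<subseteq> M \<Longrightarrow> T' \<subseteq> M \<Longrightarrow> (x, y) \<in> T \<Longrightarrow> (x, y) \<notin> T' \<Longrightarrow> sig M T \<noteq> sig M T'"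
  proof
    fix T T' x y assume a: "T \<subseteq> M" "T' \<subseteq> M" "(x, y) \<in> T" "(x, y) \<notin> T'" "sig M T = sig M T'"
    have xy: "(x, y) \<in> M" using a by blast
    have yy: "\<And>y'. (x, y') \<in> M \<Longrightarrow> y' = y"
    proof -
      fix y' assume b: "(x, y') \<in> M"
      have "(x, y') = (x, y)" using inj_onD[OF injf _ b xy] by simp
      then show "y' = y" by simp
    qed
    have nx: "\<And>x'. (x', x) \<notin> M" using mt_noin[OF mt xy] by blast
    have n1: "\<not> sig' M T (Inl x)" unfolding sig'_def sum.case using xy a(3) by blast
    have n2: "sig' M T' (Inl x)" unfolding sig'_def sum.case using yy nx a(4) by blast
    have "sig M T (enc (Inl x)) = sig M T' (enc (Inl x))" using a(5) by simp
    then show False using n1 n2 by (simp add: sig_enc)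
  qed
  show ?thesis
  proof (rule inj_onI, rule ccontr)
    fix T T' assume T: "T \<in> Pow M" "T' \<in> Pow M" "sig M T = sig M T'" "T \<noteq> T'"
    have TM: "T \<subseteq> M" "T' \<subseteq> M" using T(1,2) by auto
    obtain p where p: "p \<in> T - T' \<or> p \<in> T' - T" using T(4) by blast
    obtain x y where pxy: "p = (x, y)" by (cases p)
    show False
    proof (cases "p \<in> T - T'")
      case True
      then have "(x, y) \<in> T" "(x, y) \<notin> T'" using pxy by auto
      then show False using key[OF TM(1) TM(2)] T(3) by blast
    next
      case False
      then have "(x, y) \<in> T'" "(x, y) \<notin> T" using p pxy by auto
      then show False using key[OF TM(2) TM(1)] T(3) by metis
    qed
  qed
qed

definition idx :: "nat list \<Rightarrow> nat \<Rightarrow> nat" where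
  "idx SV x = (LEAST i. i < length SV \<and> SV ! i = x)"

lemma idx_nth: assumes "distinct SV" "i < length SV" shows "idx SV (SV ! i) = i"
  unfolding idx_def
proof (rule Least_equality)
  show "i < length SV \<and> SV ! i = SV ! i" using assms by simp
next
  fix y assume "y < length SV \<and> SV ! y = SV ! i"
  then have "y = i" using assms nth_eq_iff_index_eq by blast
  then show "i \<le> y" by simp
qed

lemma idx_in: "x \<in> set SV \<Longrightarrow> idx SV x < length SV \<and> SV ! idx SV x = x"
proof -
  assume "x \<in> set SV"
  then obtain i where "i < length SV" "SV ! i = x" by (auto simp: in_set_conv_nth)
  then show ?thesis unfolding idx_def using LeastI[of "\<lambda>j. j < length SV \<and> SV ! j = x" i] by blast
qed

definition rk :: "nat list \<Rightarrow> vx \<Rightarrow> nat" where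
  "rk SV v = (if enc (Inl v) \<in> set SV then idx SV (enc (Inl v)) else length SV + to_nat v)"

definition Xk :: "nat list \<Rightarrow> nat \<Rightarrow> nat \<Rightarrow> nat \<Rightarrow> nat set" where
  "Xk SV s d k = {x. x \<in> set SV \<and> idx SV x < k} \<union>
      {enc (Inl v) | v. v \<in> Vd s d \<and> enc (Inl v) \<notin> set SV \<and> rk SV v < k}"

lemma rk_inj: "inj_on (rk SV) V"
proof (rule inj_onI)
  fix v w assume eq: "rk SV v = rk SV w"
  show "v = w"
  proof (cases "enc (Inl v) \<in> set SV")
    case True
    note tv = idx_in[OF True]
    show ?thesis
    proof (cases "enc (Inl w) \<in> set SV")
      case True2: True
      note tw = idx_in[OF True2]
      have "idx SV (enc (Inl v)) = idx SV (enc (Inl w))" using eq True True2 by (simp add: rk_def)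
      then have "enc (Inl v) = enc (Inl w)" using tv tw by metis
      then show ?thesis by (simp add: enc_inj)
    next
      case False
      then show ?thesis using eq tv True by (simp add: rk_def)
    qed
  next
    case False
    show ?thesis
    proof (cases "enc (Inl w) \<in> set SV")
      case True2: True
      note tw = idx_in[OF True2]
      then show ?thesis using eq False True2 by (simp add: rk_def)
    next
      case False2: False
      then show ?thesis using eq False by (simp add: rk_def)
    qed
  qed
qed

lemma Xk_dclosed: "distinct SV \<Longrightarrow> dclosed SV (Xk SV s d k)"
  unfolding dclosed_def
proof (intro allI impI)
  fix i j assume d: "distinct SV" and ij: "i < j" "j < length SV" "SV ! j \<in> Xk SV s d k"
  have "SV ! j \<in> set SV" using ij by simp
  then have "idx SV (SV ! j) < k" using ij(3) by (auto simp: Xk_def)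
  then have "j < k" using idx_nth[OF d ij(2)] by simp
  then show "SV ! i \<in> Xk SV s d k" using idx_nth[OF d, of i] ij by (simp add: Xk_def)
qed

lemma Xk_mem: "v \<in> Vd s d \<Longrightarrow> enc (Inl v) \<in> Xk SV s d k \<longleftrightarrow> rk SV v < k"
proof (cases "enc (Inl v) \<in> set SV")
  case True
  then show ?thesis by (auto simp: Xk_def rk_def)
next
  case False
  assume v: "v \<in> Vd s d"
  have "enc (Inl v) \<in> Xk SV s d k \<longleftrightarrow> (\<exists>w. enc (Inl v) = enc (Inl w) \<and> w \<in> Vd s d \<and> enc (Inl w) \<notin> set SV \<and> rk SV w < k)"
    using False unfolding Xk_def by blast
  also have "\<dots> \<longleftrightarrow> rk SV v < k" using v False by (auto simp: enc_inj)
  finally show ?thesis .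
qed

lemma lower:
  assumes c1: "1 \<le> c" and s2: "2 \<le> s" and h0d: "h0 \<le> d" and big: "s * (d - h0) \<le> 3 ^ h0"
    and B: "is_c_NSOBDD c B" and comp: "computes B (Fd s d)"
  shows "2 ^ (s * (d - h0)) \<le> bp_size B ^ (2 * c - 1)"
proof -
  obtain SV where SV: "distinct SV" "\<forall>P. comp_path B P \<longrightarrow> (\<exists>Ps. length Ps = c \<and> concat Ps = P \<and>
              (\<forall>Q\<in>set Ps. sorted_wrt (sv_less SV) (label_vars Q)))"
    using B unfolding is_c_NSOBDD_def by blast
  have nbp: "is_nbp B" using B by (simp add: is_c_NSOBDD_def)
  obtain k M where kM: "mt (Ed s d) (rk SV) k (Vd s d) M" "s * (d - h0) \<le> card M"
    using order_lemma[OF s2 rk_inj h0d big] by blast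
  define X where "X = Xk SV s d k"
  have X: "\<forall>v\<in>Vd s d. enc (Inl v) \<in> X \<longleftrightarrow> rk SV v < k" using Xk_mem by (simp add: X_def)
  define S where "S = sig M ` Pow M"
  have sat: "\<forall>\<sigma>\<in>S. cnf_sat \<sigma> (Fd s d)" using sig_sat[OF kM(1)] by (auto simp: S_def)
  have fool: "\<forall>\<sigma>\<in>S. \<forall>\<tau>\<in>S. \<sigma> \<noteq> \<tau> \<longrightarrow> \<not> cnf_sat (mixa X \<sigma> \<tau>) (Fd s d) \<or> \<not> cnf_sat (mixa X \<tau> \<sigma>) (Fd s d)"
  proof (intro ballI impI)
    fix \<sigma> \<tau> assume a: "\<sigma> \<in> S" "\<tau> \<in> S" "\<sigma> \<noteq> \<tau>"
    then obtain T T' where TT: "T \<subseteq> M" "T' \<subseteq> M" "\<sigma> = sig M T" "\<tau> = sig M T'" by (auto simp: S_def)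
    then have "T \<noteq> T'" using a(3) by blast
    then obtain p where "p \<in> T - T' \<or> p \<in> T' - T" by blast
    moreover obtain x y where "p = (x, y)" by (cases p)
    ultimately have "(x, y) \<in> T - T' \<or> (x, y) \<in> T' - T" by simp
    then show "\<not> cnf_sat (mixa X \<sigma> \<tau>) (Fd s d) \<or> \<not> cnf_sat (mixa X \<tau> \<sigma>) (Fd s d)"
    proof
      assume p: "(x, y) \<in> T - T'"
      then have "(x, y) \<in> M" "(x, y) \<in> T" "(x, y) \<notin> T'" using TT by auto
      from sig_fool[OF kM(1) this X] show ?thesis using TT by simp
    next
      assume p: "(x, y) \<in> T' - T"
      then have "(x, y) \<in> M" "(x, y) \<in> T'" "(x, y) \<notin> T" using TT by auto
      from sig_fool[OF kM(1) this X] show ?thesis using TT by simp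
    qed
  qed
  have dc: "dclosed SV X" using Xk_dclosed[OF SV(1)] by (simp add: X_def)
  have "card S \<le> bp_size B ^ (2 * c - 1)"
    using partA[OF nbp SV(2) comp dc c1 sat fool] .
  moreover have "card S = 2 ^ card M"
  proof -
    have "finite M" using kM(1) by (simp add: mt_def)
    then show ?thesis using card_image[OF sig_inj[OF kM(1)]] by (simp add: S_def card_Pow)
  qed
  ultimately have "2 ^ card M \<le> bp_size B ^ (2 * c - 1)" by simp
  moreover have "2 ^ (s * (d - h0)) \<le> (2::nat) ^ card M" using kM(2) by (simp add: power_increasing)
  ultimately show ?thesis by linarith
qed

definition relS :: "nat set \<Rightarrow> nat set set \<Rightarrow> (nat \<times> nat) set" where
  "relS S TE = {(x, y). {x, y} \<in> TE \<and> x \<in> S \<and> y \<in> S}"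

lemma relS_sym: "sym (relS S TE)"
  by (auto simp: relS_def sym_def insert_commute)

lemma connected_star:
  assumes c: "c \<in> S" and h: "\<And>t. t \<in> S \<Longrightarrow> (t, c) \<in> (relS S TE)\<^sup>*"
  shows "connected_in S TE"
proof -
  have sy: "sym ((relS S TE)\<^sup>*)" using relS_sym sym_rtrancl by blast
  show ?thesis unfolding connected_in_def relS_def[symmetric]
  proof (intro ballI)
    fix a b assume "a \<in> S" "b \<in> S"
    then have "(a, c) \<in> (relS S TE)\<^sup>*" "(c, b) \<in> (relS S TE)\<^sup>*" using h sy by (auto dest: symD)
    then show "(a, b) \<in> (relS S TE)\<^sup>*" by simp
  qed
qed

lemma tree_from_par:
  fixes T :: "nat set"
  assumes fin: "finite T" and r: "rt \<in> T"
    and P: "\<And>t. t \<in> T \<Longrightarrow> t \<noteq> rt \<Longrightarrow> par t \<in> T \<and> hgt (par t) < (hgt t :: nat)"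
  shows "is_tree T {{t, par t} | t. t \<in> T - {rt}}"
proof -
  define TE where "TE = {{t, par t} | t. t \<in> T - {rt}}"
  have edges: "\<forall>e\<in>TE. \<exists>a b. e = {a, b} \<and> a \<noteq> b \<and> a \<in> T \<and> b \<in> T"
  proof
    fix e assume "e \<in> TE"
    then obtain t where t: "e = {t, par t}" "t \<in> T" "t \<noteq> rt" by (auto simp: TE_def)
    then have "t \<noteq> par t" using P[OF t(2,3)] by auto
    then show "\<exists>a b. e = {a, b} \<and> a \<noteq> b \<and> a \<in> T \<and> b \<in> T" using t P by blast
  qed
  have toroot: "\<And>n t. hgt t < n \<Longrightarrow> t \<in> T \<Longrightarrow> (t, rt) \<in> (relS T TE)\<^sup>*"
  proof -
    fix n show "\<And>t. hgt t < n \<Longrightarrow> t \<in> T \<Longrightarrow> (t, rt) \<in> (relS T TE)\<^sup>*"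
    proof (induction n)
      case 0 then show ?case by simp
    next
      case (Suc n)
      show ?case
      proof (cases "t = rt")
        case True then show ?thesis by simp
      next
        case False
        have p: "par t \<in> T" "hgt (par t) < hgt t" using P[OF Suc.prems(2) False] by auto
        have "(t, par t) \<in> relS T TE" using Suc.prems(2) False p(1) by (auto simp: relS_def TE_def)
        moreover have "(par t, rt) \<in> (relS T TE)\<^sup>*" using Suc.IH[OF _ p(1)] p(2) Suc.prems(1) by simp
        ultimately show ?thesis by (meson converse_rtrancl_into_rtrancl)
      qed
    qed
  qed
  have conn: "connected_in T TE" using connected_star[OF r] toroot by blast
  have inj: "inj_on (\<lambda>t. {t, par t}) (T - {rt})"
  proof (rule inj_onI, rule ccontr)
    fix t t' assume a: "t \<in> T - {rt}" "t' \<in> T - {rt}" "{t, par t} = {t', par t'}" "t \<noteq> t'"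
    then have "t = par t' \<and> t' = par t" by (metis doubleton_eq_iff)
    then show False using P a(1,2) by (metis DiffE insertCI less_asym)
  qed
  have "TE = (\<lambda>t. {t, par t}) ` (T - {rt})" unfolding TE_def by blast
  then have "card TE = card (T - {rt})" using card_image[OF inj] by simp
  then have "card TE + 1 = card T" using fin r by (simp add: card_Diff_singleton card_gt_0_iff)
     (metis Suc_pred card_gt_0_iff empty_iff)
  then show ?thesis using fin r edges conn unfolding is_tree_def TE_def by blast
qed


lemma Ed_cases: "e \<in> Ed s d \<Longrightarrow> \<exists>w j j'. (e = ((w, j), (w, j')) \<and> w \<in> Ad d \<and> j < j' \<and> j' < s) \<or>
    (\<exists>i. e = ((w, j), (w @ [i], j')) \<and> w @ [i] \<in> Ad d \<and> j < s \<and> j' < s)"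
  unfolding Ed_def by blast

lemma Ed_V: "e \<in> Ed s d \<Longrightarrow> fst e \<in> Vd s d \<and> snd e \<in> Vd s d"
  using Ed_cases[of e s d] Ad_prefix by (auto simp: Vd_def)

lemma Ed_node: "e \<in> Ed s d \<Longrightarrow> fst (fst e) = fst (snd e) \<or> (\<exists>i. fst (snd e) = fst (fst e) @ [i])"
  using Ed_cases[of e s d] by auto

lemma Vd_fin: "finite (Vd s d)"
proof -
  have "Vd s d \<subseteq> Ad d \<times> {..<s}" by (auto simp: Vd_def)
  then show ?thesis using finite_Ad finite_subset by blast
qed

lemma Ed_fin: "finite (Ed s d)"
proof -
  have "Ed s d \<subseteq> Vd s d \<times> Vd s d" using Ed_V by fastforce
  then show ?thesis using Vd_fin finite_subset by blast
qed

lemma V_cov: assumes "2 \<le> s" "v \<in> Vd s d" shows "\<exists>e\<in>Ed s d. fst e = v \<or> snd e = v"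
proof -
  obtain w j where v: "v = (w, j)" "w \<in> Ad d" "j < s" using assms(2) by (auto simp: Vd_def)
  show ?thesis
  proof (cases "j = 0")
    case True
    have "((w, 0), (w, 1)) \<in> Ed s d" using v assms(1) unfolding Ed_def by auto
    then show ?thesis using v True by force
  next
    case False
    have "((w, 0), (w, j)) \<in> Ed s d" using v False unfolding Ed_def by auto
    then show ?thesis using v by force
  qed
qed

definition bagE :: "vx \<times> vx \<Rightarrow> nat set" where
  "bagE e = {enc (Inl (fst e)), enc (Inl (snd e)), enc (Inr e)}"

lemma lvar_clause: "lvar ` clause_of e = bagE e"
  by (auto simp: clause_of_def bagE_def)

lemma cnf_vars_Fd: assumes "2 \<le> s" shows "cnf_vars (Fd s d) = enc ` (Inl ` Vd s d \<union> Inr ` Ed s d)"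
proof
  show "cnf_vars (Fd s d) \<subseteq> enc ` (Inl ` Vd s d \<union> Inr ` Ed s d)"
  proof
    fix x assume "x \<in> cnf_vars (Fd s d)"
    then obtain e l where el: "e \<in> Ed s d" "l \<in> clause_of e" "x = lvar l"
      by (auto simp: cnf_vars_def Fd_def)
    then have "x \<in> bagE e" using lvar_clause by blast
    then show "x \<in> enc ` (Inl ` Vd s d \<union> Inr ` Ed s d)" using Ed_V[OF el(1)] el(1) by (auto simp: bagE_def)
  qed
next
  show "enc ` (Inl ` Vd s d \<union> Inr ` Ed s d) \<subseteq> cnf_vars (Fd s d)"
  proof
    fix x assume "x \<in> enc ` (Inl ` Vd s d \<union> Inr ` Ed s d)"
    then consider v where "v \<in> Vd s d" "x = enc (Inl v)" | e where "e \<in> Ed s d" "x = enc (Inr e)" by blast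
    then obtain e where e: "e \<in> Ed s d" "x \<in> bagE e"
    proof cases
      case 1
      then obtain e where e: "e \<in> Ed s d" "fst e = v \<or> snd e = v" using V_cov[OF assms] by blast
      have "x \<in> bagE e" using 1 e(2) unfolding bagE_def by auto
      then show ?thesis using that e(1) by blast
    next
      case 2
      have "x \<in> bagE e" using 2 unfolding bagE_def by auto
      then show ?thesis using that 2(1) by blast
    qed
    then have "x \<in> lvar ` clause_of e" using lvar_clause by blast
    then show "x \<in> cnf_vars (Fd s d)" using e(1) unfolding cnf_vars_def Fd_def by blast
  qed
qed

lemma primal_Fd: "p \<in> primal_edges (Fd s d) \<Longrightarrow> \<exists>e\<in>Ed s d. p \<subseteq> bagE e"
  unfolding primal_edges_def Fd_def using lvar_clause by fastforce

type_synonym dn = "nat list + (vx \<times> vx)"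

definition enc2 :: "dn \<Rightarrow> nat" where "enc2 = to_nat"

lemma enc2_inj: "enc2 a = enc2 b \<longleftrightarrow> a = b" by (simp add: enc2_def)
lemma from_enc2: "from_nat (enc2 a) = a" by (simp add: enc2_def)

definition hgt :: "nat \<Rightarrow> nat" where
  "hgt t = (case (from_nat t :: dn) of Inl w \<Rightarrow> 2 * length w | Inr e \<Rightarrow> 2 * length (fst (snd e)) + 1)"

definition par :: "nat \<Rightarrow> nat" where
  "par t = (case (from_nat t :: dn) of Inl w \<Rightarrow> enc2 (Inl (butlast w)) | Inr e \<Rightarrow> enc2 (Inl (fst (snd e))))"

definition bag :: "nat \<Rightarrow> nat \<Rightarrow> nat set" where
  "bag s t = (case (from_nat t :: dn) of Inl w \<Rightarrow> enc ` Inl ` (grp s w \<union> grp s (butlast w)) | Inr e \<Rightarrow> bagE e)"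

definition TT :: "nat \<Rightarrow> nat \<Rightarrow> nat set" where
  "TT s d = enc2 ` (Inl ` Ad d \<union> Inr ` Ed s d)"

definition rt0 :: nat where "rt0 = enc2 (Inl [])"

lemma hgt_Inl[simp]: "hgt (enc2 (Inl w)) = 2 * length w" by (simp add: hgt_def from_enc2)
lemma hgt_Inr[simp]: "hgt (enc2 (Inr e)) = 2 * length (fst (snd e)) + 1" by (simp add: hgt_def from_enc2)
lemma par_Inl[simp]: "par (enc2 (Inl w)) = enc2 (Inl (butlast w))" by (simp add: par_def from_enc2)
lemma par_Inr[simp]: "par (enc2 (Inr e)) = enc2 (Inl (fst (snd e)))" by (simp add: par_def from_enc2)
lemma bag_Inl[simp]: "bag s (enc2 (Inl w)) = enc ` Inl ` (grp s w \<union> grp s (butlast w))" by (simp add: bag_def from_enc2)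
lemma bag_Inr[simp]: "bag s (enc2 (Inr e)) = bagE e" by (simp add: bag_def from_enc2)

lemma Ad_butlast: "w \<in> Ad d \<Longrightarrow> butlast w \<in> Ad d"
  by (auto simp: Ad_def dest: in_set_butlastD)

lemma TT_tree: "is_tree (TT s d) {{t, par t} | t. t \<in> TT s d - {rt0}}"
proof (rule tree_from_par[where hgt = hgt])
  show "finite (TT s d)" using finite_Ad Ed_fin by (simp add: TT_def)
  show "rt0 \<in> TT s d" by (auto simp: TT_def rt0_def Ad_def)
  fix t assume t: "t \<in> TT s d" "t \<noteq> rt0"
  then consider w where "w \<in> Ad d" "t = enc2 (Inl w)" | e where "e \<in> Ed s d" "t = enc2 (Inr e)"
    by (auto simp: TT_def)
  then show "par t \<in> TT s d \<and> hgt (par t) < hgt t"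
  proof cases
    case 1
    then have "w \<noteq> []" using t(2) by (auto simp: rt0_def)
    then show ?thesis using 1 Ad_butlast by (auto simp: TT_def)
  next
    case 2
    have "fst (snd e) \<in> Ad d" using Ed_V[OF 2(1)] by (auto simp: Vd_def)
    then show ?thesis using 2 by (auto simp: TT_def)
  qed
qed


lemma relS_step: "{a, b} \<in> TE \<Longrightarrow> a \<in> S \<Longrightarrow> b \<in> S \<Longrightarrow> (a, b) \<in> relS S TE"
  by (simp add: relS_def)

lemma card_bagE: "card (bagE e) \<le> 3"
  unfolding bagE_def by (rule order_trans[OF card_insert_le_m1]) (auto simp: card_insert_le_m1)

lemma tw_Fd:
  assumes s2: "2 \<le> s"
  shows "primal_treewidth (Fd s d) \<le> 2 * s - 1"
proof -
  define V where "V = cnf_vars (Fd s d)"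
  define E where "E = primal_edges (Fd s d)"
  define T where "T = TT s d"
  define TE where "TE = {{t, par t} | t. t \<in> T - {rt0}}"
  have Veq: "V = enc ` (Inl ` Vd s d \<union> Inr ` Ed s d)" using cnf_vars_Fd[OF s2] by (simp add: V_def)
  have tree: "is_tree T TE" using TT_tree by (simp add: T_def TE_def)
  have Tcases: "\<And>t. t \<in> T \<Longrightarrow> (\<exists>w. w \<in> Ad d \<and> t = enc2 (Inl w)) \<or> (\<exists>e. e \<in> Ed s d \<and> t = enc2 (Inr e))"
    unfolding T_def TT_def by blast
  have TInl: "\<And>w. w \<in> Ad d \<Longrightarrow> enc2 (Inl w) \<in> T" by (auto simp: T_def TT_def)
  have TInr: "\<And>e. e \<in> Ed s d \<Longrightarrow> enc2 (Inr e) \<in> T" by (auto simp: T_def TT_def)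
  have TEedge: "\<And>t. t \<in> T \<Longrightarrow> t \<noteq> rt0 \<Longrightarrow> {t, par t} \<in> TE" by (auto simp: TE_def)
  have b1: "\<forall>t\<in>T. bag s t \<subseteq> V"
  proof
    fix t assume "t \<in> T"
    then consider w where "w \<in> Ad d" "t = enc2 (Inl w)" | e where "e \<in> Ed s d" "t = enc2 (Inr e)"
      using Tcases by blast
    then show "bag s t \<subseteq> V"
    proof cases
      case 1
      have "grp s w \<union> grp s (butlast w) \<subseteq> Vd s d" using 1(1) Ad_butlast by (auto simp: grp_def Vd_def)
      then show ?thesis using 1 by (auto simp: Veq)
    next
      case 2 then show ?thesis using Ed_V[OF 2(1)] by (auto simp: Veq bagE_def)
    qed
  qed
  have b2: "\<forall>v\<in>V. \<exists>t\<in>T. v \<in> bag s t"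
  proof
    fix v assume "v \<in> V"
    then consider u where "u \<in> Vd s d" "v = enc (Inl u)" | e where "e \<in> Ed s d" "v = enc (Inr e)"
      by (auto simp: Veq)
    then show "\<exists>t\<in>T. v \<in> bag s t"
    proof cases
      case 1
      obtain w j where u: "u = (w, j)" "w \<in> Ad d" "j < s" using 1(1) by (auto simp: Vd_def)
      have "v \<in> bag s (enc2 (Inl w))" using 1 u by (auto simp: grp_def)
      then show ?thesis using TInl[OF u(2)] by blast
    next
      case 2
      have "v \<in> bag s (enc2 (Inr e))" using 2 by (simp add: bagE_def)
      then show ?thesis using TInr[OF 2(1)] by blast
    qed
  qed
  have b3: "\<forall>p\<in>E. \<exists>t\<in>T. p \<subseteq> bag s t"
  proof
    fix p assume "p \<in> E"
    then obtain e where e: "e \<in> Ed s d" "p \<subseteq> bagE e" using primal_Fd unfolding E_def by blast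
    then have "p \<subseteq> bag s (enc2 (Inr e))" by simp
    then show "\<exists>t\<in>T. p \<subseteq> bag s t" using TInr[OF e(1)] by blast
  qed
  have b4: "\<forall>v\<in>V. connected_in {t\<in>T. v \<in> bag s t} TE"
  proof
    fix v assume "v \<in> V"
    then consider u where "u \<in> Vd s d" "v = enc (Inl u)" | e where "e \<in> Ed s d" "v = enc (Inr e)"
      by (auto simp: Veq)
    then show "connected_in {t\<in>T. v \<in> bag s t} TE"
    proof cases
      case 2
      define S where "S = {t\<in>T. v \<in> bag s t}"
      define c where "c = enc2 (Inr e)"
      have cS: "c \<in> S" using 2 TInr[OF 2(1)] by (simp add: c_def S_def bagE_def)
      have allc: "\<And>t. t \<in> S \<Longrightarrow> t = c"
      proof -
        fix t assume t: "t \<in> S"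
        then have tT: "t \<in> T" and vb: "v \<in> bag s t" by (auto simp: S_def)
        from Tcases[OF tT] show "t = c"
        proof
          assume "\<exists>w. w \<in> Ad d \<and> t = enc2 (Inl w)"
          then obtain w where "t = enc2 (Inl w)" by blast
          then show ?thesis using vb 2(2) by (auto simp: enc_inj)
        next
          assume "\<exists>e'. e' \<in> Ed s d \<and> t = enc2 (Inr e')"
          then obtain e' where "t = enc2 (Inr e')" by blast
          then show ?thesis using vb 2(2) by (auto simp: enc_inj bagE_def c_def)
        qed
      qed
      show ?thesis unfolding S_def[symmetric] using connected_star[OF cS] allc by blast
    next
      case 1
      obtain w j where u: "u = (w, j)" "w \<in> Ad d" "j < s" using 1(1) by (auto simp: Vd_def)
      define S where "S = {t\<in>T. v \<in> bag s t}"
      define c where "c = enc2 (Inl w)"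
      have cS: "c \<in> S" using 1 u TInl[OF u(2)] by (auto simp: c_def S_def grp_def)
      have child: "\<And>w'. w' \<in> Ad d \<Longrightarrow> butlast w' = w \<Longrightarrow> w' \<noteq> w \<Longrightarrow>
          enc2 (Inl w') \<in> S \<and> (enc2 (Inl w'), c) \<in> relS S TE"
      proof -
        fix w' assume w': "w' \<in> Ad d" "butlast w' = w" "w' \<noteq> w"
        have inS: "enc2 (Inl w') \<in> S" using TInl[OF w'(1)] 1 u w'(2) by (auto simp: S_def grp_def)
        have "w' \<noteq> []" using w' by auto
        then have "enc2 (Inl w') \<noteq> rt0" by (auto simp: rt0_def enc2_inj)
        then have "{enc2 (Inl w'), c} \<in> TE" using TEedge[OF TInl[OF w'(1)]] w'(2) by (simp add: c_def)
        then show "enc2 (Inl w') \<in> S \<and> (enc2 (Inl w'), c) \<in> relS S TE"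
          using inS cS relS_step by blast
      qed
      have reach: "\<And>t. t \<in> S \<Longrightarrow> (t, c) \<in> (relS S TE)\<^sup>*"
      proof -
        fix t assume t: "t \<in> S"
        then have tT: "t \<in> T" and vb: "v \<in> bag s t" by (auto simp: S_def)
        from Tcases[OF tT] show "(t, c) \<in> (relS S TE)\<^sup>*"
        proof
          assume "\<exists>w'. w' \<in> Ad d \<and> t = enc2 (Inl w')"
          then obtain w' where w': "w' \<in> Ad d" "t = enc2 (Inl w')" by blast
          have "u \<in> grp s w' \<union> grp s (butlast w')" using vb w'(2) 1(2) by (auto simp: enc_inj)
          then have "w = w' \<or> w = butlast w'" using u(1) by (auto simp: grp_def)
          then show ?thesis
          proof
            assume "w = w'" then show ?thesis using w'(2) by (simp add: c_def)
          next
            assume wb: "w = butlast w'"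
            show ?thesis
            proof (cases "w' = w")
              case True then show ?thesis using w'(2) by (simp add: c_def)
            next
              case False
              then show ?thesis using child[OF w'(1) wb[symmetric]] w'(2) by blast
            qed
          qed
        next
          assume "\<exists>e. e \<in> Ed s d \<and> t = enc2 (Inr e)"
          then obtain e where e: "e \<in> Ed s d" "t = enc2 (Inr e)" by blast
          have ue: "u = fst e \<or> u = snd e" using vb e(2) 1(2) by (auto simp: enc_inj bagE_def)
          define pe where "pe = fst (snd e)"
          have peA: "pe \<in> Ad d" using Ed_V[OF e(1)] by (auto simp: pe_def Vd_def)
          have tne: "t \<noteq> rt0" using e(2) by (auto simp: rt0_def enc2_inj)
          have edge: "{t, enc2 (Inl pe)} \<in> TE" using TEedge[OF tT tne] e(2) by (simp add: pe_def)
          show ?thesis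
          proof (cases "pe = w")
            case True
            then have "(t, c) \<in> relS S TE" using edge t cS relS_step by (simp add: c_def)
            then show ?thesis by blast
          next
            case False
            have "u \<noteq> snd e"
            proof
              assume "u = snd e"
              then have "fst (snd e) = w" using u(1) by (metis fst_conv)
              then show False using False by (simp add: pe_def)
            qed
            then have fe: "fst e = u" using ue by blast
            then obtain i where pei: "pe = w @ [i]" using Ed_node[OF e(1)] False u(1) by (auto simp: pe_def)
            have ch: "enc2 (Inl pe) \<in> S \<and> (enc2 (Inl pe), c) \<in> relS S TE"
              using child[OF peA] pei by simp
            then have "(t, enc2 (Inl pe)) \<in> relS S TE" using edge t relS_step by blast
            then show ?thesis using ch by (meson converse_rtrancl_into_rtrancl r_into_rtrancl)
          qed
        qed
      qed
      show ?thesis unfolding S_def[symmetric] using connected_star[OF cS reach] .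
    qed
  qed
  have cards: "\<forall>t\<in>T. finite (bag s t) \<and> card (bag s t) \<le> (2 * s - 1) + 1"
  proof
    fix t assume "t \<in> T"
    then consider w where "w \<in> Ad d" "t = enc2 (Inl w)" | e where "e \<in> Ed s d" "t = enc2 (Inr e)"
      using Tcases by blast
    then show "finite (bag s t) \<and> card (bag s t) \<le> (2 * s - 1) + 1"
    proof cases
      case 1
      have "card (bag s t) \<le> card (grp s w \<union> grp s (butlast w))"
        using 1 by (simp add: card_image_le finite_grp image_image)
      also have "\<dots> \<le> card (grp s w) + card (grp s (butlast w))" by (rule card_Un_le)
      also have "\<dots> = 2 * s" by (simp add: card_grp)
      finally show ?thesis using 1 s2 by (simp add: finite_grp)
    next
      case 2
      then show ?thesis using card_bagE[of e] s2 by (simp add: bagE_def)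
    qed
  qed
  have "tree_decomp V E T TE (bag s)" unfolding tree_decomp_def using tree b1 b2 b3 b4 by blast
  then have "\<exists>T TE bag. tree_decomp V E T TE bag \<and> (\<forall>t\<in>T. finite (bag t) \<and> card (bag t) \<le> (2 * s - 1) + 1)"
    using cards by blast
  then show ?thesis unfolding primal_treewidth_def treewidth_def V_def[symmetric] E_def[symmetric]
    by (rule Least_le)
qed

lemma sq3: "6 \<le> h \<Longrightarrow> 9 * h^2 \<le> (3::nat) ^ h"
proof (induction h rule: dec_induct)
  case base then show ?case by simp
next
  case (step h)
  have a: "6 * h \<le> h * h" using step.hyps(1) by simp
  have e1: "9 * (Suc h)^2 = 9 * (h * h) + 18 * h + 9" by (simp add: power2_eq_square algebra_simps)
  have e2: "3 * (9 * h^2) = 27 * (h * h)" by (simp add: power2_eq_square)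
  have "9 * (Suc h)^2 \<le> 3 * (9 * h^2)" unfolding e1 e2 using a step.hyps(1) by linarith
  also have "\<dots> \<le> 3 * 3 ^ h" using step.IH by simp
  finally show ?case by simp
qed

lemma big3: assumes "s + 4 \<le> h" "2 \<le> s" shows "s * (4 * h + 5) \<le> (3::nat) ^ h"
proof -
  have "s * (4 * h + 5) \<le> h * (9 * h)" using assms by (intro mult_le_mono) auto
  also have "\<dots> = 9 * h^2" by (simp add: power2_eq_square)
  also have "\<dots> \<le> 3 ^ h" using sq3 assms by simp
  finally show ?thesis .
qed

lemma pow43: "(3::nat) ^ (5 * h + 6) \<le> 4 ^ (4 * h + 5)"
proof -
  have "(3::nat) ^ (5 * h + 6) = 243 ^ h * 729" by (simp add: power_add power_mult)
  also have "\<dots> \<le> 256 ^ h * 1024" by (intro mult_le_mono power_mono) auto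
  also have "\<dots> = 4 ^ (4 * h + 5)" by (simp add: power_add power_mult)
  finally show ?thesis .
qed

lemma s_bounds: fixes p s :: nat assumes "3 \<le> p" "s = (p + 1) div 2"
  shows "2 \<le> s" "p \<le> 2 * s" "2 * s - 1 \<le> p" "5 * s^2 \<le> 3 * p^2"
proof -
  show "2 \<le> s" "p \<le> 2 * s" "2 * s - 1 \<le> p" using assms by auto
  have "2 * s \<le> p + 1" using assms by auto
  then have "(2 * s)^2 \<le> (p + 1)^2" by (rule power_mono) simp
  then have a: "4 * s^2 \<le> p^2 + 2 * p + 1" by (simp add: power2_eq_square algebra_simps)
  have b: "21 * p \<le> 7 * p^2" using assms(1) by (simp add: power2_eq_square)
  show "5 * s^2 \<le> 3 * p^2" using a b assms(1) by linarith
qed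

lemma sum3: "(\<Sum>i\<le>d. (3::nat) ^ i) \<le> 3 ^ (d + 1)"
  by (induction d) auto

lemma card_Ad: "card (Ad d) \<le> 3 ^ (d + 1)"
proof -
  have "Ad d = {xs. set xs \<subseteq> {..<3} \<and> length xs \<le> d}" by (auto simp: Ad_def)
  then have "card (Ad d) = (\<Sum>i\<le>d. 3 ^ i)" using card_lists_length_le[of "{..<3::nat}" d] by simp
  then show ?thesis using sum3 by simp
qed

lemma card_Ad_ge: "d + 1 \<le> card (Ad d)"
proof -
  have "(\<lambda>n. replicate n (0::nat)) ` {..d} \<subseteq> Ad d" by (auto simp: Ad_def)
  moreover have "inj_on (\<lambda>n. replicate n (0::nat)) {..d}" by (auto simp: inj_on_def)
  ultimately have "card ((\<lambda>n. replicate n (0::nat)) ` {..d}) = d + 1" "card ((\<lambda>n. replicate n (0::nat)) ` {..d}) \<le> card (Ad d)"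
    using card_image[of "\<lambda>n. replicate n (0::nat)" "{..d}"] card_mono[OF finite_Ad] by (simp, blast)
  then show ?thesis by simp
qed

lemma card_Vd: "card (Vd s d) = card (Ad d) * s"
proof -
  have "Vd s d = Ad d \<times> {..<s}" by (auto simp: Vd_def)
  then show ?thesis by (simp add: card_cartesian_product)
qed

lemma card_Ed: "card (Ed s d) \<le> 4 * s^2 * card (Ad d)"
proof -
  define f1 :: "nat list \<times> nat \<times> nat \<Rightarrow> vx \<times> vx" where "f1 = (\<lambda>(w, j, j'). ((w, j), (w, j')))"
  define f2 :: "nat list \<times> nat \<times> nat \<times> nat \<Rightarrow> vx \<times> vx" where "f2 = (\<lambda>(w, i, j, j'). ((w, j), (w @ [i], j')))"
  have "Ed s d \<subseteq> f1 ` (Ad d \<times> {..<s} \<times> {..<s}) \<union> f2 ` (Ad d \<times> {..<3} \<times> {..<s} \<times> {..<s})"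
  proof
    fix e assume "e \<in> Ed s d"
    then obtain w j j' where "(e = ((w, j), (w, j')) \<and> w \<in> Ad d \<and> j < j' \<and> j' < s) \<or>
      (\<exists>i. e = ((w, j), (w @ [i], j')) \<and> w @ [i] \<in> Ad d \<and> j < s \<and> j' < s)" using Ed_cases by blast
    then show "e \<in> f1 ` (Ad d \<times> {..<s} \<times> {..<s}) \<union> f2 ` (Ad d \<times> {..<3} \<times> {..<s} \<times> {..<s})"
    proof
      assume a: "e = ((w, j), (w, j')) \<and> w \<in> Ad d \<and> j < j' \<and> j' < s"
      then have "e = f1 (w, j, j')" "(w, j, j') \<in> Ad d \<times> {..<s} \<times> {..<s}" by (auto simp: f1_def)
      then show ?thesis by blast
    next
      assume "\<exists>i. e = ((w, j), (w @ [i], j')) \<and> w @ [i] \<in> Ad d \<and> j < s \<and> j' < s"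
      then obtain i where a: "e = ((w, j), (w @ [i], j'))" "w @ [i] \<in> Ad d" "j < s" "j' < s" by blast
      have "w \<in> Ad d" "i < 3" using a(2) Ad_prefix by (auto simp: Ad_def)
      then have "e = f2 (w, i, j, j')" "(w, i, j, j') \<in> Ad d \<times> {..<3} \<times> {..<s} \<times> {..<s}"
        using a by (auto simp: f2_def)
      then show ?thesis by blast
    qed
  qed
  then have "card (Ed s d) \<le> card (f1 ` (Ad d \<times> {..<s} \<times> {..<s}) \<union> f2 ` (Ad d \<times> {..<3} \<times> {..<s} \<times> {..<s}))"
    by (intro card_mono) (auto simp: finite_Ad)
  also have "\<dots> \<le> card (f1 ` (Ad d \<times> {..<s} \<times> {..<s})) + card (f2 ` (Ad d \<times> {..<3} \<times> {..<s} \<times> {..<s}))"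
    by (rule card_Un_le)
  also have "\<dots> \<le> card (Ad d \<times> {..<s} \<times> {..<s}) + card (Ad d \<times> {..<3::nat} \<times> {..<s} \<times> {..<s})"
    by (intro add_mono card_image_le) (auto simp: finite_Ad)
  also have "\<dots> = card (Ad d) * s * s + card (Ad d) * 3 * s * s" by (simp add: card_cartesian_product)
  also have "\<dots> \<le> 4 * s^2 * card (Ad d)" by (simp add: power2_eq_square)
  finally show ?thesis .
qed

lemma is_cnf_Fd: "is_cnf (Fd s d)"
  by (simp add: is_cnf_def Fd_def Ed_fin clause_of_def)

lemma m_bound: assumes s2: "2 \<le> s" shows "card (cnf_vars (Fd s d)) \<le> 5 * s^2 * 3^(d+1)"
proof -
  have "card (cnf_vars (Fd s d)) = card (enc ` (Inl ` Vd s d \<union> Inr ` Ed s d))"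
    using cnf_vars_Fd[OF s2] by simp
  also have "\<dots> \<le> card (Inl ` Vd s d \<union> Inr ` Ed s d)" by (rule card_image_le) (simp add: Vd_fin Ed_fin)
  also have "\<dots> \<le> card (Inl ` Vd s d :: vt set) + card (Inr ` Ed s d :: vt set)" by (rule card_Un_le)
  also have "\<dots> \<le> card (Vd s d) + card (Ed s d)"
    by (intro add_mono card_image_le) (simp_all add: Vd_fin Ed_fin)
  also have "\<dots> \<le> card (Ad d) * s + 4 * s^2 * card (Ad d)" using card_Vd card_Ed by (intro add_mono) auto
  also have "\<dots> \<le> s^2 * card (Ad d) + 4 * s^2 * card (Ad d)"
  proof -
    have "s \<le> s^2" using s2 by (simp add: power2_eq_square)
    then show ?thesis by (simp add: mult.commute)
  qed
  also have "\<dots> = 5 * s^2 * card (Ad d)" by simp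
  also have "\<dots> \<le> 5 * s^2 * 3^(d+1)" using card_Ad by simp
  finally show ?thesis .
qed

lemma m_lower: assumes s2: "2 \<le> s" shows "d + 1 \<le> card (cnf_vars (Fd s d))"
proof -
  have fin: "finite (cnf_vars (Fd s d))" using cnf_vars_Fd[OF s2] by (simp add: Vd_fin Ed_fin)
  have sub: "enc ` Inl ` Vd s d \<subseteq> cnf_vars (Fd s d)" using cnf_vars_Fd[OF s2] by blast
  have inj: "inj_on (enc \<circ> Inl) (Vd s d)" by (auto simp: inj_on_def enc_inj)
  have "card (enc ` Inl ` Vd s d) = card (Vd s d)"
    using card_image[OF inj] by (simp add: image_comp)
  also have "\<dots> = card (Ad d) * s" by (rule card_Vd)
  also have "\<dots> \<ge> card (Ad d)" using s2 by simp
  finally have "card (Ad d) \<le> card (enc ` Inl ` Vd s d)" .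
  then show ?thesis using card_Ad_ge[of d] card_mono[OF fin sub] by linarith
qed

lemma num_final:
  fixes p s h c N m :: nat
  assumes p3: "3 \<le> p" and s: "s = (p + 1) div 2" and c1: "1 \<le> c"
    and mle: "m \<le> 5 * s^2 * 3^(5*h+6)" and big: "2^(s*(4*h+5)) \<le> N^(2*c-1)"
  shows "(real m / (3 * real p ^ 2)) powr (real p / (8 * real c - 4)) \<le> real N"
proof -
  define n where "n = 2 * c - 1"
  have n1: "1 \<le> n" using c1 by (simp add: n_def)
  have en: "8 * real c - 4 = 4 * real n" using c1 by (simp add: n_def of_nat_diff)
  have sb: "p \<le> 2 * s" "5 * s^2 \<le> 3 * p^2" using s_bounds[OF p3 s] by auto
  have q: "real m / (3 * real p ^ 2) \<le> 3^(5*h+6)"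
  proof -
    have "real m \<le> real (5 * s^2 * 3^(5*h+6))" using mle by linarith
    also have "\<dots> \<le> real (3 * p^2 * 3^(5*h+6))" using sb(2) by (simp only: of_nat_le_iff) simp
    also have "\<dots> = (3 * real p ^ 2) * 3^(5*h+6)" by simp
    finally show ?thesis using p3 by (simp add: divide_le_eq mult.commute)
  qed
  have key: "(3::nat)^((5*h+6)*p) \<le> N^(4*n)"
  proof -
    have "(3::nat)^((5*h+6)*p) = (3^(5*h+6))^p" by (simp add: power_mult)
    also have "\<dots> \<le> (4^(4*h+5))^p" using pow43 by (rule power_mono) simp
    also have "\<dots> = 4^((4*h+5)*p)" by (simp add: power_mult)
    also have "\<dots> = 2^(2*(4*h+5)*p)"
    proof -
      have four: "\<And>k. (4::nat)^k = 2^(2*k)" by (simp add: power_mult)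
      show ?thesis using four[of "(4*h+5)*p"] by (simp add: mult.assoc)
    qed
    also have "\<dots> \<le> 2^(4*(s*(4*h+5)))"
    proof (rule power_increasing)
      have "2*(4*h+5)*p = (4*h+5)*(2*p)" by simp
      also have "\<dots> \<le> (4*h+5)*(4*s)" using sb(1) by simp
      also have "\<dots> = 4*(s*(4*h+5))" by (simp add: algebra_simps)
      finally show "2*(4*h+5)*p \<le> 4*(s*(4*h+5))" .
    qed simp
    also have "\<dots> = (2^(s*(4*h+5)))^4" by (simp add: power_mult[symmetric] mult.commute)
    also have "\<dots> \<le> (N^n)^4" using big by (simp add: n_def power_mono)
    also have "\<dots> = N^(4*n)" by (simp add: power_mult[symmetric] mult.commute)
    finally show ?thesis .
  qed
  have Npos: "0 < N"
  proof (rule ccontr)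
    assume "\<not> 0 < N"
    then have "N = 0" by simp
    then have "N^(4*n) = 0" using n1 by simp
    moreover have "(0::nat) < 3^((5*h+6)*p)" by simp
    ultimately show False using key by linarith
  qed
  have keyr: "(3::real)^((5*h+6)*p) \<le> real N^(4*n)"
    using key by (metis of_nat_le_iff of_nat_numeral of_nat_power)
  have expo: "real p / (8 * real c - 4) = real p / (4 * real n)" using en by simp
  have pos4: "0 < 4 * real n" using n1 by simp
  have "(real m / (3 * real p ^ 2)) powr (real p / (4 * real n)) \<le> ((3::real)^(5*h+6)) powr (real p / (4 * real n))"
    by (rule powr_mono2) (use q pos4 in auto)
  also have "\<dots> = (3::real) powr (real (5*h+6) * (real p / (4 * real n)))"
    by (simp add: powr_realpow[symmetric] powr_powr)
  also have "\<dots> = (3::real) powr (real ((5*h+6)*p) * (1 / (4 * real n)))" by simp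
  also have "\<dots> = ((3::real)^((5*h+6)*p)) powr (1 / (4 * real n))"
    by (simp add: powr_realpow[symmetric] powr_powr)
  also have "\<dots> \<le> (real N^(4*n)) powr (1 / (4 * real n))"
    by (rule powr_mono2) (use keyr in auto)
  also have "\<dots> = real N powr (real (4*n) * (1 / (4 * real n)))"
    using Npos by (simp add: powr_realpow[symmetric] powr_powr)
  also have "\<dots> = real N" using n1 Npos by simp
  finally show ?thesis unfolding expo .
qed


theorem theorem2:
  fixes c :: nat
  assumes "c \<ge> 1"
  shows "\<forall>p::nat. p \<ge> 3 \<longrightarrow>
    (\<exists>F :: nat \<Rightarrow> nat cnf.
       (\<forall>i. is_cnf (F i) \<and> primal_treewidth (F i) \<le> p) \<and>
       filterlim (\<lambda>i. card (cnf_vars (F i))) at_top sequentially \<and>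
       (\<forall>i. \<forall>B :: nat bp. is_c_NSOBDD c B \<and> computes B (F i) \<longrightarrow>
          real (bp_size B) \<ge>
            (real (card (cnf_vars (F i))) / (3 * real p ^ 2)) powr
              (real p / (8 * real c - 4))))"
proof (intro allI impI)
  fix p :: nat assume p3: "p \<ge> 3"
  define s where "s = (p + 1) div 2"
  have sb: "2 \<le> s" "p \<le> 2 * s" "2 * s - 1 \<le> p" "5 * s^2 \<le> 3 * p^2"
    using s_bounds[OF p3 s_def] by auto
  define hh where "hh i = i + s + 4" for i :: nat
  define dd where "dd i = 5 * hh i + 5" for i
  define F where "F i = Fd s (dd i)" for i
  have P1: "\<forall>i. is_cnf (F i) \<and> primal_treewidth (F i) \<le> p"
  proof
    fix i
    show "is_cnf (F i) \<and> primal_treewidth (F i) \<le> p"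
      using is_cnf_Fd tw_Fd[OF sb(1), of "dd i"] sb(3) by (simp add: F_def)
  qed
  have P2: "filterlim (\<lambda>i. card (cnf_vars (F i))) at_top sequentially"
  proof (rule filterlim_at_top_mono[OF filterlim_ident])
    show "\<forall>\<^sub>F i in sequentially. i \<le> card (cnf_vars (F i))"
    proof (rule always_eventually, rule allI)
      fix i
      have "i \<le> dd i + 1" by (simp add: dd_def hh_def)
      then show "i \<le> card (cnf_vars (F i))" using m_lower[OF sb(1), of "dd i"] by (simp add: F_def)
    qed
  qed
  have P3: "\<forall>i. \<forall>B :: nat bp. is_c_NSOBDD c B \<and> computes B (F i) \<longrightarrow>
          real (bp_size B) \<ge>
            (real (card (cnf_vars (F i))) / (3 * real p ^ 2)) powr (real p / (8 * real c - 4))"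
  proof (intro allI impI)
    fix i and B :: "nat bp" assume a: "is_c_NSOBDD c B \<and> computes B (F i)"
    have h0d: "hh i \<le> dd i" by (simp add: dd_def)
    have dh: "dd i - hh i = 4 * hh i + 5" by (simp add: dd_def)
    have big: "s * (dd i - hh i) \<le> 3 ^ hh i" unfolding dh using big3[OF _ sb(1), of "hh i"] by (simp add: hh_def)
    have low: "2 ^ (s * (dd i - hh i)) \<le> bp_size B ^ (2 * c - 1)"
      using lower[OF assms sb(1) h0d big] a by (simp add: F_def)
    have mle: "card (cnf_vars (F i)) \<le> 5 * s^2 * 3^(5 * hh i + 6)"
      using m_bound[OF sb(1), of "dd i"] by (simp add: F_def dd_def add.commute)
    show "real (bp_size B) \<ge>
            (real (card (cnf_vars (F i))) / (3 * real p ^ 2)) powr (real p / (8 * real c - 4))"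
      using num_final[OF p3 s_def assms mle] low dh by simp
  qed
  show "\<exists>F :: nat \<Rightarrow> nat cnf.
       (\<forall>i. is_cnf (F i) \<and> primal_treewidth (F i) \<le> p) \<and>
       filterlim (\<lambda>i. card (cnf_vars (F i))) at_top sequentially \<and>
       (\<forall>i. \<forall>B :: nat bp. is_c_NSOBDD c B \<and> computes B (F i) \<longrightarrow>
          real (bp_size B) \<ge>
            (real (card (cnf_vars (F i))) / (3 * real p ^ 2)) powr
              (real p / (8 * real c - 4)))"
    using P1 P2 P3 by blast
qed

end
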